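(* Consider either the filter-based or the feature-based SDL loss $L(\mathbf{W},\mathbf{H},\boldsymbol{\beta},\boldsymbol{\Gamma})$ described in the context, assume (A4), and assume the constraint sets $\mathcal{C}^{\mathrm{dict}}\subseteq\mathbb{R}^{p\times r}$, $\mathcal{C}^{\mathrm{code}}\subseteq\mathbb{R}^{r\times n}$, $\mathcal{C}^{\mathrm{beta}}\subseteq\mathbb{R}^{r\times\kappa}$, $\mathcal{C}^{\mathrm{aux}}\subseteq\mathbb{R}^{q\times\kappa}$ are convex and compact. Write $\boldsymbol{\Theta}=\mathcal{C}^{\mathrm{dict}}\times\mathcal{C}^{\mathrm{code}}\times\mathcal{C}^{\mathrm{beta}}\times\mathcal{C}^{\mathrm{aux}}$, and let $\mathbf{Z}_t=(\mathbf{W}_t,\mathbf{H}_t,\boldsymbol{\beta}_t,\boldsymbol{\Gamma}_t)$ be the iterates of the block coordinate descent with diminishing radius (BCD-DR) with radii $r_t$ satisfying $\sum_{t=1}^\infty r_t=\infty$ and $\sum_{t=1}^\infty r_t^2<\infty$. Then for every initial estimate $\mathbf{Z}_0\in\boldsymbol{\Theta}$ and every $\xi\ge0$: (i) $\mathbf{Z}_t$ converges to the set of stationary points of $L$ over $\boldsymbol{\Theta}$; (ii) for each $T\ge1$, $$\min_{1\le k\le T}\Big[-\inf_{\mathbf{Z}\in\boldsymbol{\Theta}}\Big\langle\nabla L(\mathbf{Z}_k),\frac{\mathbf{Z}-\mathbf{Z}_k}{\|\mathbf{Z}-\mathbf{Z}_k\|_F}\Big\rangle\Big]=O\Big(\Big(\sum_{k=1}^T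 r_k\Big)^{-1}\Big);$$ (iii) if $r_k=1/(\sqrt k\log k)$, then for each $\varepsilon>0$ an $\varepsilon$-stationary point is achieved within $O(\varepsilon^{-1}(\log\varepsilon^{-1})^2)$ iterations.
   Context: Data: $\mathbf{X}_{\mathrm{data}}=[\mathbf{x}_1,\dots,\mathbf{x}_n]\in\mathbb{R}^{p\times n}$, $\mathbf{X}_{\mathrm{aux}}=[\mathbf{x}_1',\dots,\mathbf{x}_n']\in\mathbb{R}^{q\times n}$, labels $y_i\in\{0,\dots,\kappa\}$. Fix a score function $h:\mathbb{R}\to[0,\infty)$; for $\mathbf{a}\in\mathbb{R}^\kappa$, $g_0(\mathbf{a})=1/(1+\sum_{c=1}^\kappa h(a_c))$, $g_j(\mathbf{a})=h(a_j)/(1+\sum_{c}h(a_c))$, and $\ell(y,\mathbf{g}(\mathbf{a}))=-\sum_{j=0}^\kappa\mathbf{1}(y=j)\log g_j(\mathbf{a})$. For $\mathbf{W}\in\mathbb{R}^{p\times r}$, $\mathbf{H}=[\mathbf{h}_1,\dots,\mathbf{h}_n]\in\mathbb{R}^{r\times n}$, $\boldsymbol{\beta}\in\mathbb{R}^{r\times\kappa}$, $\boldsymbol{\Gamma}\in\mathbb{R}^{q\times\kappa}$, the SDL loss is $L=\sum_{i=1}^n\ell(y_i,\mathbf{g}(\mathbf{a}_i))+\xi\|\mathbf{X}_{\mathrm{data}}-\mathbf{W}\mathbf{H}\|_F^2$, where $\mathbf{a}_i=\boldsymbol{\beta}^T\mathbf{W}^T\mathbf{x}_i+\boldsymbol{\Gamma}^T\mathbf{x}_i'$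 (filter-based) or $\mathbf{a}_i=\boldsymbol{\beta}^T\mathbf{h}_i+\boldsymbol{\Gamma}^T\mathbf{x}_i'$ (feature-based). BCD-DR: initialize $(\mathbf{W}_0,\mathbf{H}_0,\boldsymbol{\beta}_0,\boldsymbol{\Gamma}_0)\in\boldsymbol{\Theta}$; for $k\ge1$, $\mathbf{W}_k\in\arg\min\{L(\mathbf{W},\mathbf{H}_{k-1},\boldsymbol{\beta}_{k-1},\boldsymbol{\Gamma}_{k-1}):\mathbf{W}\in\mathcal{C}^{\mathrm{dict}},\|\mathbf{W}-\mathbf{W}_{k-1}\|_F\le r_k\}$, then $\boldsymbol{\beta}_k\in\arg\min\{L(\mathbf{W}_k,\mathbf{H}_{k-1},\boldsymbol{\beta},\boldsymbol{\Gamma}_{k-1}):\boldsymbol{\beta}\in\mathcal{C}^{\mathrm{beta}},\|\boldsymbol{\beta}-\boldsymbol{\beta}_{k-1}\|_F\le r_k\}$, then $\boldsymbol{\Gamma}_k\in\arg\min\{L(\mathbf{W}_k,\mathbf{H}_{k-1},\boldsymbol{\beta}_k,\boldsymbol{\Gamma}):\boldsymbol{\Gamma}\in\mathcal{C}^{\mathrm{aux}},\|\boldsymbol{\Gamma}-\boldsymbol{\Gamma}_{k-1}\|_F\le r_k\}$, then $\mathbf{H}_k\in\arg\min\{L(\mathbf{W}_k,\mathbf{H},\boldsymbol{\beta}_k,\boldsymbol{\Gamma}_k):\mathbf{H}\in\mathcal{C}^{\mathrm{code}},\|\mathbf{H}-\mathbf{H}_{k-1}\|_F\le r_k\}$. A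 point $\mathbf{Z}^*\in\boldsymbol{\Theta}$ is stationary for $L$ over $\boldsymbol{\Theta}$ if $\langle\nabla L(\mathbf{Z}^* ),\mathbf{Z}-\mathbf{Z}^*\rangle\ge0$ for all $\mathbf{Z}\in\boldsymbol{\Theta}$; it is $\varepsilon$-stationary if $-\inf_{\mathbf{Z}\in\boldsymbol{\Theta}}\langle\nabla L(\mathbf{Z}^* ),(\mathbf{Z}-\mathbf{Z}^* )/\|\mathbf{Z}-\mathbf{Z}^*\|_F\rangle\le\sqrt\varepsilon$ (Frobenius norm on the product, summing squares over blocks). (A4): $h$ is twice continuously differentiable, and for some constant $M>0$ there are constants $\gamma_{\max},\alpha^-,\alpha^+>0$ with $\gamma_{\max}=\sup_{\|\mathbf{a}\|<M}\max_s\|\dot{\mathbf{h}}(y_s,\mathbf{a})\|_\infty$, $\alpha^-=\inf_{\|\mathbf{a}\|<M}\min_s\lambda_{\min}(\ddot{\mathbf{H}}(y_s,\mathbf{a}))$, $\alpha^+=\sup_{\|\mathbf{a}\|<M}\max_s\lambda_{\max}(\ddot{\mathbf{H}}(y_s,\mathbf{a}))$, where $\dot h_j(y,\mathbf{a})=\frac{h'(a_j)}{1+\sum_c h(a_c)}-\mathbf{1}(y=j)\frac{h'(a_j)}{h(a_j)}$ and $\ddot{\mathbf{H}}(y,\mathbf{a})_{ij}=\frac{h''(a_j)\mathbf{1}(i=j)}{1+\sum_c h(a_c)}-\frac{h'(a_i)h'(a_j)}{(1+\sum_c h(a_c))^2}-\mathbf{1}(y=i=j)\Big(\frac{h''(a_j)}{h(a_j)}-\frac{h'(a_j)^2}{h(a_j)^2}\Big)$.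 *)

theory Defs
  imports "HOL-Analysis.Analysis" "HOL-Library.Landau_Symbols"
begin

text \<open>Dimensions: data dim p = CARD('p), aux dim q = CARD('q), rank r = CARD('r),
  samples n = CARD('n), number of non-baseline classes kappa = CARD('k).
  A label in {0,...,kappa} is an element of 'k option (None = class 0, Some j = class j).
  Matrices are real^cols^rows, so norm is the Frobenius norm.\<close>

datatype sdl_kind = FilterBased | FeatureBased

definition sdl_g :: "(real \<Rightarrow> real) \<Rightarrow> real^'k \<Rightarrow> 'k option \<Rightarrow> real" where
  "sdl_g h a j = (case j of
      None \<Rightarrow> 1 / (1 + (\<Sum>c\<in>UNIV. h (a $ c)))
    | Some jj \<Rightarrow> h (a $ jj) / (1 + (\<Sum>c\<in>UNIV. h (a $ c))))"

definition sdl_ell :: "(real \<Rightarrow> real) \<Rightarrow> 'k::finite option \<Rightarrow> real^'k \<Rightarrow> real" where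
  "sdl_ell h y a = - (\<Sum>j\<in>UNIV. (if y = j then 1 else 0) * ln (sdl_g h a j))"

type_synonym ('p,'q,'r,'n,'k) sdl_param =
  "(real^'r^'p) \<times> (real^'n^'r) \<times> (real^'k^'r) \<times> (real^'k^'q)"

definition sdl_act ::
  "sdl_kind \<Rightarrow> real^'n^'p \<Rightarrow> real^'n^'q \<Rightarrow> ('p::finite,'q::finite,'r::finite,'n::finite,'k::finite) sdl_param
     \<Rightarrow> 'n \<Rightarrow> real^'k" where
  "sdl_act kind Xd Xa Z i = (case Z of (W, H, \<beta>, \<Gamma>) \<Rightarrow>
     (case kind of
        FilterBased \<Rightarrow> transpose \<beta> *v (transpose W *v column i Xd)
      | FeatureBased \<Rightarrow> transpose \<beta> *v column i H)
     + transpose \<Gamma> *v column i Xa)"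

definition sdl_loss ::
  "(real \<Rightarrow> real) \<Rightarrow> sdl_kind \<Rightarrow> real^'n^'p \<Rightarrow> real^'n^'q \<Rightarrow> ('n \<Rightarrow> 'k option) \<Rightarrow> real
     \<Rightarrow> ('p::finite,'q::finite,'r::finite,'n::finite,'k::finite) sdl_param \<Rightarrow> real" where
  "sdl_loss h kind Xd Xa y \<xi> Z =
     (\<Sum>i\<in>UNIV. sdl_ell h (y i) (sdl_act kind Xd Xa Z i))
     + \<xi> * (norm (Xd - fst Z ** fst (snd Z)))\<^sup>2"

text \<open>Block coordinate descent with diminishing radius; Z : nat \<Rightarrow> parameter is any
  sequence of iterates produced by BCD-DR (any choice of minimizers).\<close>
definition bcd_dr ::
  "(('a::real_normed_vector) \<times> ('b::real_normed_vector) \<times> ('c::real_normed_vector) \<times> ('d::real_normed_vector) \<Rightarrow> real)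
    \<Rightarrow> 'a set \<Rightarrow> 'b set \<Rightarrow> 'c set \<Rightarrow> 'd set \<Rightarrow> (nat \<Rightarrow> real) \<Rightarrow> (nat \<Rightarrow> 'a \<times> 'b \<times> 'c \<times> 'd) \<Rightarrow> bool" where
  "bcd_dr L CW CH Cb CG r Z \<longleftrightarrow>
     Z 0 \<in> CW \<times> CH \<times> Cb \<times> CG \<and>
     (\<forall>k\<ge>1. case Z (k - 1) of (W0, H0, b0, G0) \<Rightarrow> (case Z k of (W1, H1, b1, G1) \<Rightarrow>
        is_arg_min (\<lambda>W. L (W, H0, b0, G0)) (\<lambda>W. W \<in> CW \<and> dist W W0 \<le> r k) W1 \<and>
        is_arg_min (\<lambda>b. L (W1, H0, b, G0)) (\<lambda>b. b \<in> Cb \<and> dist b b0 \<le> r k) b1 \<and>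
        is_arg_min (\<lambda>G. L (W1, H0, b1, G)) (\<lambda>G. G \<in> CG \<and> dist G G0 \<le> r k) G1 \<and>
        is_arg_min (\<lambda>H. L (W1, H, b1, G1)) (\<lambda>H. H \<in> CH \<and> dist H H0 \<le> r k) H1))"

definition grad :: "('a::real_inner \<Rightarrow> real) \<Rightarrow> 'a \<Rightarrow> 'a" where
  "grad f x = (THE G. (f has_derivative (\<lambda>v. inner G v)) (at x))"

definition stationary_on :: "('a::real_inner \<Rightarrow> real) \<Rightarrow> 'a set \<Rightarrow> 'a \<Rightarrow> bool" where
  "stationary_on L \<Theta> Z \<longleftrightarrow> Z \<in> \<Theta> \<and> (\<forall>Z'\<in>\<Theta>. inner (grad L Z) (Z' - Z) \<ge> 0)"

text \<open>Stationarity measure  - inf_{Z' in Theta} <grad L(Z), (Z'-Z)/||Z'-Z||>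
  (the term Z' = Z contributes 0, by the convention x/0 = 0).\<close>
definition stat_measure :: "('a::real_inner \<Rightarrow> real) \<Rightarrow> 'a set \<Rightarrow> 'a \<Rightarrow> real" where
  "stat_measure L \<Theta> Z = - (INF Z'\<in>\<Theta>. inner (grad L Z) ((1 / norm (Z' - Z)) *\<^sub>R (Z' - Z)))"

definition eps_stationary :: "('a::real_inner \<Rightarrow> real) \<Rightarrow> 'a set \<Rightarrow> real \<Rightarrow> 'a \<Rightarrow> bool" where
  "eps_stationary L \<Theta> \<epsilon> Z \<longleftrightarrow> Z \<in> \<Theta> \<and> stat_measure L \<Theta> Z \<le> sqrt \<epsilon>"

definition sdl_hdot :: "(real \<Rightarrow> real) \<Rightarrow> (real \<Rightarrow> real) \<Rightarrow> 'k::finite option \<Rightarrow> real^'k \<Rightarrow> real^'k" where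
  "sdl_hdot h h' y a = (\<chi> j. h' (a $ j) / (1 + (\<Sum>c\<in>UNIV. h (a $ c)))
        - (if y = Some j then h' (a $ j) / h (a $ j) else 0))"

definition sdl_Hddot ::
  "(real \<Rightarrow> real) \<Rightarrow> (real \<Rightarrow> real) \<Rightarrow> (real \<Rightarrow> real) \<Rightarrow> 'k::finite option \<Rightarrow> real^'k \<Rightarrow> real^'k^'k" where
  "sdl_Hddot h h' h'' y a = (\<chi> i j.
        (if i = j then h'' (a $ j) / (1 + (\<Sum>c\<in>UNIV. h (a $ c))) else 0)
      - h' (a $ i) * h' (a $ j) / (1 + (\<Sum>c\<in>UNIV. h (a $ c)))\<^sup>2
      - (if y = Some i \<and> i = j then h'' (a $ j) / h (a $ j) - (h' (a $ j))\<^sup>2 / (h (a $ j))\<^sup>2 else 0))"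

definition real_eigenvalues :: "real^'k^'k \<Rightarrow> real set" where
  "real_eigenvalues A = {c. \<exists>v. v \<noteq> 0 \<and> A *v v = c *\<^sub>R v}"

definition lambda_min :: "real^'k^'k \<Rightarrow> real" where
  "lambda_min A = Min (real_eigenvalues A)"

definition lambda_max :: "real^'k^'k \<Rightarrow> real" where
  "lambda_max A = Max (real_eigenvalues A)"

definition assm_A4 ::
  "(real \<Rightarrow> real) \<Rightarrow> (real \<Rightarrow> real) \<Rightarrow> (real \<Rightarrow> real) \<Rightarrow> ('n \<Rightarrow> 'k::finite option) \<Rightarrow> bool" where
  "assm_A4 h h' h'' y \<longleftrightarrow>
     (\<forall>x. (h has_real_derivative h' x) (at x)) \<and>
     (\<forall>x. (h' has_real_derivative h'' x) (at x)) \<and> continuous_on UNIV h'' \<and>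
     (\<exists>M>0.
        bdd_above {infnorm (sdl_hdot h h' (y s) a) | s a. norm a < M} \<and>
        Sup {infnorm (sdl_hdot h h' (y s) a) | s a. norm a < M} > 0 \<and>
        bdd_below {lambda_min (sdl_Hddot h h' h'' (y s) a) | s a. norm a < M} \<and>
        Inf {lambda_min (sdl_Hddot h h' h'' (y s) a) | s a. norm a < M} > 0 \<and>
        bdd_above {lambda_max (sdl_Hddot h h' h'' (y s) a) | s a. norm a < M} \<and>
        Sup {lambda_max (sdl_Hddot h h' h'' (y s) a) | s a. norm a < M} > 0)"

end

theory Submission
  imports Defs "HOL-Real_Asymp.Real_Asymp"
begin


definition smooth_on :: "'a::real_normed_vector set \<Rightarrow> ('a \<Rightarrow> 'b::real_normed_vector) \<Rightarrow> ('a \<Rightarrow> 'a \<Rightarrow> 'b) \<Rightarrow> bool" where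
  "smooth_on S f D \<longleftrightarrow> (\<forall>x\<in>S. (f has_derivative D x) (at x)) \<and>
     (\<exists>K. \<forall>x\<in>S. \<forall>y\<in>S. \<forall>v. norm (f x) \<le> K \<and> norm (f x - f y) \<le> K * norm (x - y) \<and>
        norm (D x v) \<le> K * norm v \<and> norm (D x v - D y v) \<le> K * norm (x - y) * norm v)"

lemma smooth_onI:
  assumes "\<And>x. x \<in> S \<Longrightarrow> (f has_derivative D x) (at x)"
    and "\<And>x. x \<in> S \<Longrightarrow> norm (f x) \<le> K"
    and "\<And>x y. x \<in> S \<Longrightarrow> y \<in> S \<Longrightarrow> norm (f x - f y) \<le> K * norm (x - y)"
    and "\<And>x v. x \<in> S \<Longrightarrow> norm (D x v) \<le> K * norm v"
    and "\<And>x y v. x \<in> S \<Longrightarrow> y \<in> S \<Longrightarrow> norm (D x v - D y v) \<le> K * norm (x - y) * norm v"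
  shows "smooth_on S f D"
  unfolding smooth_on_def using assms by blast

lemma smooth_onE:
  assumes "smooth_on S f D"
  obtains K where "K > 0"
    "\<And>x. x \<in> S \<Longrightarrow> (f has_derivative D x) (at x)"
    "\<And>x. x \<in> S \<Longrightarrow> norm (f x) \<le> K"
    "\<And>x y. x \<in> S \<Longrightarrow> y \<in> S \<Longrightarrow> norm (f x - f y) \<le> K * norm (x - y)"
    "\<And>x v. x \<in> S \<Longrightarrow> norm (D x v) \<le> K * norm v"
    "\<And>x y v. x \<in> S \<Longrightarrow> y \<in> S \<Longrightarrow> norm (D x v - D y v) \<le> K * norm (x - y) * norm v"
proof -
  from assms obtain K where d: "\<forall>x\<in>S. (f has_derivative D x) (at x)" and
    K: "\<forall>x\<in>S. \<forall>y\<in>S. \<forall>v. norm (f x) \<le> K \<and> norm (f x - f y) \<le> K * norm (x - y) \<and>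
        norm (D x v) \<le> K * norm v \<and> norm (D x v - D y v) \<le> K * norm (x - y) * norm v"
    unfolding smooth_on_def by blast
  define K' where "K' = max K 1"
  have KK: "K \<le> K'" "K' > 0" unfolding K'_def by auto
  show ?thesis
  proof (rule that[of K'])
    show "K' > 0" by fact
    show "(f has_derivative D x) (at x)" if "x \<in> S" for x using d that by blast
    show "norm (f x) \<le> K'" if "x \<in> S" for x using K that KK by fastforce
    show "norm (f x - f y) \<le> K' * norm (x - y)" if "x \<in> S" "y \<in> S" for x y
      using K that KK by (meson mult_right_mono norm_ge_zero order_trans)
    show "norm (D x v) \<le> K' * norm v" if "x \<in> S" for x v
      using K that KK by (meson mult_right_mono norm_ge_zero order_trans)
    show "norm (D x v - D y v) \<le> K' * norm (x - y) * norm v" if "x \<in> S" "y \<in> S" for x y v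
    proof -
      have "norm (D x v - D y v) \<le> K * norm (x - y) * norm v" using K that by blast
      also have "\<dots> \<le> K' * norm (x - y) * norm v"
        using KK by (intro mult_right_mono) auto
      finally show ?thesis .
    qed
  qed
qed

lemma smooth_on_subset: "smooth_on S f D \<Longrightarrow> T \<subseteq> S \<Longrightarrow> smooth_on T f D"
  unfolding smooth_on_def by (meson subsetD)

lemma smooth_const: "smooth_on S (\<lambda>x. c) (\<lambda>x v. 0)"
  by (rule smooth_onI[where K="norm c"]) auto

lemma smooth_linear:
  assumes "bounded_linear f" "bounded S"
  shows "smooth_on S f (\<lambda>x. f)"
proof -
  obtain K where K: "K > 0" "\<And>x. norm (f x) \<le> norm x * K"
    using bounded_linear.pos_bounded[OF assms(1)] by blast
  obtain B where B: "\<And>x. x \<in> S \<Longrightarrow> norm x \<le> B"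
    using assms(2) unfolding bounded_iff by blast
  show ?thesis
  proof (rule smooth_onI[where K="K * (max B 0) + K"])
    show "(f has_derivative f) (at x)" for x using assms(1) by (rule bounded_linear_imp_has_derivative)
    show "norm (f x) \<le> K * max B 0 + K" if "x \<in> S" for x
    proof -
      have "norm (f x) \<le> norm x * K" by fact
      also have "\<dots> \<le> max B 0 * K" using B[OF that] K by (intro mult_right_mono) auto
      finally show ?thesis using K by (simp add: mult.commute)
    qed
    show "norm (f x - f y) \<le> (K * max B 0 + K) * norm (x - y)" for x y
    proof -
      have "norm (f x - f y) = norm (f (x - y))" by (simp add: linear_diff assms(1) bounded_linear.linear)
      also have "\<dots> \<le> norm (x - y) * K" by fact
      also have "\<dots> \<le> norm (x - y) * (K * max B 0 + K)" using K by (intro mult_left_mono) auto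
      finally show ?thesis by (simp add: mult.commute)
    qed
    show "norm (f v) \<le> (K * max B 0 + K) * norm v" for v
    proof -
      have "norm (f v) \<le> norm v * K" by fact
      also have "\<dots> \<le> norm v * (K * max B 0 + K)" using K by (intro mult_left_mono) auto
      finally show ?thesis by (simp add: mult.commute)
    qed
    show "norm (f v - f v) \<le> (K * max B 0 + K) * norm (x - y) * norm v" for x y v
      using K by simp
  qed
qed

lemma smooth_compose:
  assumes F: "smooth_on U F DF" and f: "smooth_on S f Df" and img: "\<And>x. x \<in> S \<Longrightarrow> f x \<in> U"
  shows "smooth_on S (\<lambda>x. F (f x)) (\<lambda>x v. DF (f x) (Df x v))"
proof -
  obtain A where A: "A > 0"
    "\<And>x. x \<in> U \<Longrightarrow> (F has_derivative DF x) (at x)"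
    "\<And>x. x \<in> U \<Longrightarrow> norm (F x) \<le> A"
    "\<And>x y. x \<in> U \<Longrightarrow> y \<in> U \<Longrightarrow> norm (F x - F y) \<le> A * norm (x - y)"
    "\<And>x v. x \<in> U \<Longrightarrow> norm (DF x v) \<le> A * norm v"
    "\<And>x y v. x \<in> U \<Longrightarrow> y \<in> U \<Longrightarrow> norm (DF x v - DF y v) \<le> A * norm (x - y) * norm v"
    using smooth_onE[OF F] by blast
  obtain B where B: "B > 0"
    "\<And>x. x \<in> S \<Longrightarrow> (f has_derivative Df x) (at x)"
    "\<And>x. x \<in> S \<Longrightarrow> norm (f x) \<le> B"
    "\<And>x y. x \<in> S \<Longrightarrow> y \<in> S \<Longrightarrow> norm (f x - f y) \<le> B * norm (x - y)"
    "\<And>x v. x \<in> S \<Longrightarrow> norm (Df x v) \<le> B * norm v"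
    "\<And>x y v. x \<in> S \<Longrightarrow> y \<in> S \<Longrightarrow> norm (Df x v - Df y v) \<le> B * norm (x - y) * norm v"
    using smooth_onE[OF f] by blast
  have AB: "A * B > 0" "A * B * B > 0" using A B by auto
  show ?thesis
  proof (rule smooth_onI[where K="A + A * B + A * B * B"])
    fix x assume x: "x \<in> S"
    show "((\<lambda>x. F (f x)) has_derivative (\<lambda>v. DF (f x) (Df x v))) (at x)"
      using has_derivative_compose[OF B(2)[OF x] A(2)[OF img[OF x]]] by simp
    show "norm (F (f x)) \<le> A + A * B + A * B * B" using A(3)[OF img[OF x]] AB by linarith
    fix v
    have "norm (DF (f x) (Df x v)) \<le> A * norm (Df x v)" using A(5) img x by blast
    also have "\<dots> \<le> A * (B * norm v)" using B(5)[OF x] A by (intro mult_left_mono) auto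
    also have "\<dots> \<le> (A + A * B + A * B * B) * norm v" using A B
      by (simp add: mult.assoc distrib_right mult_nonneg_nonneg)
    finally show "norm (DF (f x) (Df x v)) \<le> (A + A * B + A * B * B) * norm v" .
  next
    fix x y assume x: "x \<in> S" and y: "y \<in> S"
    have "norm (F (f x) - F (f y)) \<le> A * norm (f x - f y)" using A(4) img x y by blast
    also have "\<dots> \<le> A * (B * norm (x - y))" using B(4)[OF x y] A by (intro mult_left_mono) auto
    also have "\<dots> \<le> (A + A * B + A * B * B) * norm (x - y)" using A B
      by (simp add: mult.assoc distrib_right mult_nonneg_nonneg)
    finally show "norm (F (f x) - F (f y)) \<le> (A + A * B + A * B * B) * norm (x - y)" .
    fix v
    have lin: "linear (DF (f y))" using A(2)[OF img[OF y]] by (simp add: has_derivative_linear)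
    have "DF (f x) (Df x v) - DF (f y) (Df y v) = (DF (f x) (Df x v) - DF (f y) (Df x v)) + DF (f y) (Df x v - Df y v)"
      using lin by (simp add: linear_diff)
    hence "norm (DF (f x) (Df x v) - DF (f y) (Df y v)) \<le> norm (DF (f x) (Df x v) - DF (f y) (Df x v)) + norm (DF (f y) (Df x v - Df y v))"
      by (metis norm_triangle_ineq)
    also have "norm (DF (f x) (Df x v) - DF (f y) (Df x v)) \<le> A * norm (f x - f y) * norm (Df x v)"
      using A(6) img x y by blast
    also have "\<dots> \<le> A * (B * norm (x - y)) * (B * norm v)"
      using A(1) B(1) B(4)[OF x y] B(5)[OF x] by (intro mult_mono mult_nonneg_nonneg) auto
    also have "norm (DF (f y) (Df x v - Df y v)) \<le> A * norm (Df x v - Df y v)" using A(5) img y by blast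
    also have "\<dots> \<le> A * (B * norm (x - y) * norm v)" using A B(6)[OF x y] by (intro mult_left_mono) auto
    also have "A * (B * norm (x - y)) * (B * norm v) + A * (B * norm (x - y) * norm v) \<le> (A + A * B + A * B * B) * norm (x - y) * norm v"
      using A B by (simp add: algebra_simps mult_nonneg_nonneg)
    finally show "norm (DF (f x) (Df x v) - DF (f y) (Df y v)) \<le> (A + A * B + A * B * B) * norm (x - y) * norm v"
      by simp
  qed
qed

lemma bb_le:
  assumes "\<And>a b. norm (p a b) \<le> norm a * norm b * Kp" "Kp \<ge> 0" "norm a \<le> \<alpha>" "norm b \<le> \<beta>"
  shows "norm (p a b) \<le> Kp * \<alpha> * \<beta>"
proof -
  have "norm (p a b) \<le> norm a * norm b * Kp" by fact
  also have "\<dots> \<le> \<alpha> * \<beta> * Kp" using assms(2-4) norm_ge_zero[of a] norm_ge_zero[of b]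
    by (intro mult_right_mono mult_mono) (auto intro: order_trans[OF norm_ge_zero])
  finally show ?thesis by (simp add: mult.commute mult.left_commute)
qed

lemma smooth_bilinear:
  assumes p: "bounded_bilinear p" and f: "smooth_on S f Df" and g: "smooth_on S g Dg"
  shows "smooth_on S (\<lambda>x. p (f x) (g x)) (\<lambda>x v. p (f x) (Dg x v) + p (Df x v) (g x))"
proof -
  obtain A where A: "A > 0"
    "\<And>x. x \<in> S \<Longrightarrow> (f has_derivative Df x) (at x)"
    "\<And>x. x \<in> S \<Longrightarrow> norm (f x) \<le> A"
    "\<And>x y. x \<in> S \<Longrightarrow> y \<in> S \<Longrightarrow> norm (f x - f y) \<le> A * norm (x - y)"
    "\<And>x v. x \<in> S \<Longrightarrow> norm (Df x v) \<le> A * norm v"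
    "\<And>x y v. x \<in> S \<Longrightarrow> y \<in> S \<Longrightarrow> norm (Df x v - Df y v) \<le> A * norm (x - y) * norm v"
    using smooth_onE[OF f] by blast
  obtain B where B: "B > 0"
    "\<And>x. x \<in> S \<Longrightarrow> (g has_derivative Dg x) (at x)"
    "\<And>x. x \<in> S \<Longrightarrow> norm (g x) \<le> B"
    "\<And>x y. x \<in> S \<Longrightarrow> y \<in> S \<Longrightarrow> norm (g x - g y) \<le> B * norm (x - y)"
    "\<And>x v. x \<in> S \<Longrightarrow> norm (Dg x v) \<le> B * norm v"
    "\<And>x y v. x \<in> S \<Longrightarrow> y \<in> S \<Longrightarrow> norm (Dg x v - Dg y v) \<le> B * norm (x - y) * norm v"
    using smooth_onE[OF g] by blast
  obtain Kp where Kp: "Kp > 0" "\<And>a b. norm (p a b) \<le> norm a * norm b * Kp"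
    using bounded_bilinear.pos_bounded[OF p] by blast
  note bb = bb_le[of p Kp, OF Kp(2) less_imp_le[OF Kp(1)]]
  have P: "Kp * A * B > 0" using A B Kp by auto
  show ?thesis
  proof (rule smooth_onI[where K="4 * (Kp * A * B)"])
    fix x assume x: "x \<in> S"
    show "((\<lambda>x. p (f x) (g x)) has_derivative (\<lambda>v. p (f x) (Dg x v) + p (Df x v) (g x))) (at x)"
      by (rule bounded_bilinear.FDERIV[OF p A(2)[OF x] B(2)[OF x]])
    show "norm (p (f x) (g x)) \<le> 4 * (Kp * A * B)" using bb[OF A(3)[OF x] B(3)[OF x]] P by linarith
    fix v
    have "norm (p (f x) (Dg x v) + p (Df x v) (g x)) \<le> norm (p (f x) (Dg x v)) + norm (p (Df x v) (g x))"
      by (rule norm_triangle_ineq)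
    also have "norm (p (f x) (Dg x v)) \<le> Kp * A * (B * norm v)" by (rule bb[OF A(3)[OF x] B(5)[OF x]])
    also have "norm (p (Df x v) (g x)) \<le> Kp * (A * norm v) * B" by (rule bb[OF A(5)[OF x] B(3)[OF x]])
    finally have "norm (p (f x) (Dg x v) + p (Df x v) (g x)) \<le> 2 * (Kp * A * B * norm v)"
      by (simp add: algebra_simps)
    moreover have "0 \<le> Kp * A * B * norm v" using P by simp
    ultimately show "norm (p (f x) (Dg x v) + p (Df x v) (g x)) \<le> 4 * (Kp * A * B) * norm v"
      by (simp add: mult.assoc)
  next
    fix x y assume x: "x \<in> S" and y: "y \<in> S"
    have e1: "p (f x) (g x) - p (f y) (g y) = p (f x - f y) (g x) + p (f y) (g x - g y)"
      by (simp add: bounded_bilinear.diff_left[OF p] bounded_bilinear.diff_right[OF p])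
    have "norm (p (f x) (g x) - p (f y) (g y)) \<le> norm (p (f x - f y) (g x)) + norm (p (f y) (g x - g y))"
      unfolding e1 by (rule norm_triangle_ineq)
    also have "norm (p (f x - f y) (g x)) \<le> Kp * (A * norm (x - y)) * B" by (rule bb[OF A(4)[OF x y] B(3)[OF x]])
    also have "norm (p (f y) (g x - g y)) \<le> Kp * A * (B * norm (x - y))" by (rule bb[OF A(3)[OF y] B(4)[OF x y]])
    finally have "norm (p (f x) (g x) - p (f y) (g y)) \<le> 2 * (Kp * A * B * norm (x - y))"
      by (simp add: algebra_simps)
    moreover have "0 \<le> Kp * A * B * norm (x - y)" using P by simp
    ultimately show "norm (p (f x) (g x) - p (f y) (g y)) \<le> 4 * (Kp * A * B) * norm (x - y)"
      by (simp add: mult.assoc)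
    fix v
    have e2: "(p (f x) (Dg x v) + p (Df x v) (g x)) - (p (f y) (Dg y v) + p (Df y v) (g y)) =
       (p (f x - f y) (Dg x v) + p (f y) (Dg x v - Dg y v)) + (p (Df x v - Df y v) (g x) + p (Df y v) (g x - g y))"
      by (simp add: bounded_bilinear.diff_left[OF p] bounded_bilinear.diff_right[OF p] algebra_simps)
    have "norm ((p (f x) (Dg x v) + p (Df x v) (g x)) - (p (f y) (Dg y v) + p (Df y v) (g y))) \<le>
       (norm (p (f x - f y) (Dg x v)) + norm (p (f y) (Dg x v - Dg y v))) + (norm (p (Df x v - Df y v) (g x)) + norm (p (Df y v) (g x - g y)))"
      unfolding e2 by (meson add_mono norm_triangle_ineq order_trans)
    also have "norm (p (f x - f y) (Dg x v)) \<le> Kp * (A * norm (x - y)) * (B * norm v)" by (rule bb[OF A(4)[OF x y] B(5)[OF x]])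
    also have "norm (p (f y) (Dg x v - Dg y v)) \<le> Kp * A * (B * norm (x - y) * norm v)" by (rule bb[OF A(3)[OF y] B(6)[OF x y]])
    also have "norm (p (Df x v - Df y v) (g x)) \<le> Kp * (A * norm (x - y) * norm v) * B" by (rule bb[OF A(6)[OF x y] B(3)[OF x]])
    also have "norm (p (Df y v) (g x - g y)) \<le> Kp * (A * norm v) * (B * norm (x - y))" by (rule bb[OF A(5)[OF y] B(4)[OF x y]])
    finally show "norm ((p (f x) (Dg x v) + p (Df x v) (g x)) - (p (f y) (Dg y v) + p (Df y v) (g y))) \<le> 4 * (Kp * A * B) * norm (x - y) * norm v"
      by (simp add: algebra_simps)
  qed
qed

lemma smooth_add:
  assumes f: "smooth_on S f Df" and g: "smooth_on S g Dg"
  shows "smooth_on S (\<lambda>x. f x + g x) (\<lambda>x v. Df x v + Dg x v)"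
proof -
  obtain A where A: "A > 0"
    "\<And>x. x \<in> S \<Longrightarrow> (f has_derivative Df x) (at x)"
    "\<And>x. x \<in> S \<Longrightarrow> norm (f x) \<le> A"
    "\<And>x y. x \<in> S \<Longrightarrow> y \<in> S \<Longrightarrow> norm (f x - f y) \<le> A * norm (x - y)"
    "\<And>x v. x \<in> S \<Longrightarrow> norm (Df x v) \<le> A * norm v"
    "\<And>x y v. x \<in> S \<Longrightarrow> y \<in> S \<Longrightarrow> norm (Df x v - Df y v) \<le> A * norm (x - y) * norm v"
    using smooth_onE[OF f] by blast
  obtain B where B: "B > 0"
    "\<And>x. x \<in> S \<Longrightarrow> (g has_derivative Dg x) (at x)"
    "\<And>x. x \<in> S \<Longrightarrow> norm (g x) \<le> B"
    "\<And>x y. x \<in> S \<Longrightarrow> y \<in> S \<Longrightarrow> norm (g x - g y) \<le> B * norm (x - y)"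
    "\<And>x v. x \<in> S \<Longrightarrow> norm (Dg x v) \<le> B * norm v"
    "\<And>x y v. x \<in> S \<Longrightarrow> y \<in> S \<Longrightarrow> norm (Dg x v - Dg y v) \<le> B * norm (x - y) * norm v"
    using smooth_onE[OF g] by blast
  show ?thesis
  proof (rule smooth_onI[where K="A + B"])
    fix x assume x: "x \<in> S"
    show "((\<lambda>x. f x + g x) has_derivative (\<lambda>v. Df x v + Dg x v)) (at x)"
      by (intro has_derivative_add A(2) B(2) x)
    show "norm (f x + g x) \<le> A + B" using A(3)[OF x] B(3)[OF x] norm_triangle_ineq[of "f x" "g x"] by linarith
    fix v
    show "norm (Df x v + Dg x v) \<le> (A + B) * norm v" using A(5)[OF x, of v] B(5)[OF x, of v] norm_triangle_ineq[of "Df x v" "Dg x v"]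
      by (simp add: distrib_right)
  next
    fix x y assume x: "x \<in> S" and y: "y \<in> S"
    have "norm (f x + g x - (f y + g y)) \<le> norm (f x - f y) + norm (g x - g y)"
      by (metis add_diff_add norm_triangle_ineq)
    then show "norm (f x + g x - (f y + g y)) \<le> (A + B) * norm (x - y)"
      using A(4)[OF x y] B(4)[OF x y] by (simp add: distrib_right)
    fix v
    have "norm (Df x v + Dg x v - (Df y v + Dg y v)) \<le> norm (Df x v - Df y v) + norm (Dg x v - Dg y v)"
      by (metis add_diff_add norm_triangle_ineq)
    then show "norm (Df x v + Dg x v - (Df y v + Dg y v)) \<le> (A + B) * norm (x - y) * norm v"
      using A(6)[OF x y, of v] B(6)[OF x y, of v] by (simp add: distrib_right)
  qed
qed

lemma smooth_sum:
  assumes "finite I" "\<And>i. i \<in> I \<Longrightarrow> smooth_on S (f i) (Df i)"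
  shows "smooth_on S (\<lambda>x. \<Sum>i\<in>I. f i x) (\<lambda>x v. \<Sum>i\<in>I. Df i x v)"
  using assms
proof (induction I rule: finite_induct)
  case empty
  then show ?case using smooth_const[of S 0] by simp
next
  case (insert a F)
  then show ?case using smooth_add[of S "f a" "Df a" "\<lambda>x. \<Sum>i\<in>F. f i x" "\<lambda>x v. \<Sum>i\<in>F. Df i x v"]
    by simp
qed

lemma smooth_scale:
  assumes "smooth_on S f Df"
  shows "smooth_on S (\<lambda>x. c *\<^sub>R f x) (\<lambda>x v. c *\<^sub>R Df x v)"
  using smooth_bilinear[OF bounded_bilinear_scaleR smooth_const[of S c] assms] by simp

lemma smooth_neg:
  assumes "smooth_on S f Df"
  shows "smooth_on S (\<lambda>x. - f x) (\<lambda>x v. - Df x v)"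
  using smooth_scale[OF assms, of "-1"] by simp

lemma smooth_diff:
  assumes "smooth_on S f Df" "smooth_on S g Dg"
  shows "smooth_on S (\<lambda>x. f x - g x) (\<lambda>x v. Df x v - Dg x v)"
  using smooth_add[OF assms(1) smooth_neg[OF assms(2)]] by simp

lemma lip_from_deriv:
  fixes f f' :: "real \<Rightarrow> real"
  assumes d: "\<And>t. t \<in> {a..b} \<Longrightarrow> (f has_real_derivative f' t) (at t)"
    and M: "\<And>t. t \<in> {a..b} \<Longrightarrow> \<bar>f' t\<bar> \<le> M"
    and s: "s \<in> {a..b}" and t: "t \<in> {a..b}"
  shows "\<bar>f s - f t\<bar> \<le> M * \<bar>s - t\<bar>"
proof -
  have main: "\<bar>f s - f t\<bar> \<le> M * \<bar>s - t\<bar>" if st: "s < t" "s \<in> {a..b}" "t \<in> {a..b}" for s t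
  proof -
    obtain z where z: "s < z" "z < t" "f t - f s = (t - s) * f' z"
      using MVT2[OF st(1), of f f'] d st by (meson atLeastAtMost_iff order_trans)
    have zab: "z \<in> {a..b}" using z st by auto
    have "\<bar>f s - f t\<bar> = \<bar>t - s\<bar> * \<bar>f' z\<bar>" proof -
      have "f s - f t = - ((t - s) * f' z)" using z(3) by simp
      then show ?thesis by (simp only: abs_minus_cancel abs_mult)
    qed
    also have "\<dots> \<le> \<bar>t - s\<bar> * M" using M[OF zab] by (intro mult_left_mono) auto
    finally show ?thesis by (simp add: abs_minus_commute mult.commute)
  qed
  show ?thesis
  proof (cases s t rule: linorder_cases)
    case less then show ?thesis using main s t by blast
  next
    case equal then show ?thesis using M[OF s] by simp
  next
    case greater then show ?thesis using main[of t s] s t by (simp add: abs_minus_commute)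
  qed
qed

lemma cont_bound:
  fixes f :: "real \<Rightarrow> real"
  assumes "continuous_on {a..b} f"
  obtains M where "M > 0" "\<And>t. t \<in> {a..b} \<Longrightarrow> \<bar>f t\<bar> \<le> M"
proof -
  have "compact (f ` {a..b})" by (rule compact_continuous_image[OF assms compact_Icc])
  then obtain B where B: "\<forall>x\<in>f ` {a..b}. norm x \<le> B" using compact_imp_bounded bounded_iff by metis
  show ?thesis by (rule that[of "max B 1"]) (use B in force)+
qed

lemma smooth_real:
  fixes \<phi> \<phi>' \<phi>'' :: "real \<Rightarrow> real"
  assumes d1: "\<And>t. t \<in> {a..b} \<Longrightarrow> (\<phi> has_real_derivative \<phi>' t) (at t)"
    and d2: "\<And>t. t \<in> {a..b} \<Longrightarrow> (\<phi>' has_real_derivative \<phi>'' t) (at t)"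
    and c: "continuous_on {a..b} \<phi>''"
  shows "smooth_on {a..b} \<phi> (\<lambda>t v. \<phi>' t * v)"
proof -
  have c0: "continuous_on {a..b} \<phi>"
    using d1 by (meson DERIV_isCont continuous_at_imp_continuous_on)
  have c1: "continuous_on {a..b} \<phi>'"
    using d2 by (meson DERIV_isCont continuous_at_imp_continuous_on)
  obtain M0 where M0: "M0 > 0" "\<And>t. t \<in> {a..b} \<Longrightarrow> \<bar>\<phi> t\<bar> \<le> M0" using cont_bound[OF c0] by blast
  obtain M1 where M1: "M1 > 0" "\<And>t. t \<in> {a..b} \<Longrightarrow> \<bar>\<phi>' t\<bar> \<le> M1" using cont_bound[OF c1] by blast
  obtain M2 where M2: "M2 > 0" "\<And>t. t \<in> {a..b} \<Longrightarrow> \<bar>\<phi>'' t\<bar> \<le> M2" using cont_bound[OF c] by blast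
  show ?thesis
  proof (rule smooth_onI[where K="M0 + M1 + M2"])
    fix x assume x: "x \<in> {a..b}"
    show "(\<phi> has_derivative (\<lambda>v. \<phi>' x * v)) (at x)" using d1[OF x] by (simp add: has_field_derivative_def)
    show "norm (\<phi> x) \<le> M0 + M1 + M2" using M0(2)[OF x] M1 M2 by simp
    fix v
    show "norm (\<phi>' x * v) \<le> (M0 + M1 + M2) * norm v" using M1(2)[OF x] M0 M2
      by (simp add: abs_mult mult_right_mono)
  next
    fix x y assume x: "x \<in> {a..b}" and y: "y \<in> {a..b}"
    have "\<bar>\<phi> x - \<phi> y\<bar> \<le> M1 * \<bar>x - y\<bar>" by (rule lip_from_deriv[OF d1 M1(2) x y])
    then show "norm (\<phi> x - \<phi> y) \<le> (M0 + M1 + M2) * norm (x - y)" using M0 M2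
      by (smt (verit, best) abs_ge_zero mult_right_mono real_norm_def)
    fix v
    have "\<bar>\<phi>' x - \<phi>' y\<bar> \<le> M2 * \<bar>x - y\<bar>" by (rule lip_from_deriv[OF d2 M2(2) x y])
    hence "\<bar>\<phi>' x - \<phi>' y\<bar> * \<bar>v\<bar> \<le> (M0 + M1 + M2) * \<bar>x - y\<bar> * \<bar>v\<bar>" using M0 M1
      by (smt (verit, best) abs_ge_zero mult_right_mono)
    then show "norm (\<phi>' x * v - \<phi>' y * v) \<le> (M0 + M1 + M2) * norm (x - y) * norm v"
      by (simp add: left_diff_distrib[symmetric] abs_mult)
  qed
qed


lemma riesz_repr:
  fixes f :: "'a::euclidean_space \<Rightarrow> real"
  assumes "linear f"
  shows "f v = inner (\<Sum>b\<in>Basis. f b *\<^sub>R b) v"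
proof -
  have "f v = f (\<Sum>b\<in>Basis. (v \<bullet> b) *\<^sub>R b)" by (simp add: euclidean_representation)
  also have "\<dots> = (\<Sum>b\<in>Basis. (v \<bullet> b) * f b)" using assms by (simp add: linear_sum linear_scale)
  also have "\<dots> = inner (\<Sum>b\<in>Basis. f b *\<^sub>R b) v" by (simp add: inner_sum_left inner_sum_right inner_commute mult.commute)
  finally show ?thesis .
qed

definition gvec :: "('a::euclidean_space \<Rightarrow> 'a \<Rightarrow> real) \<Rightarrow> 'a \<Rightarrow> 'a" where
  "gvec D x = (\<Sum>b\<in>Basis. D x b *\<^sub>R b)"

lemma grad_eq:
  fixes L :: "'a::euclidean_space \<Rightarrow> real"
  assumes "(L has_derivative D x) (at x)"
  shows "grad L x = gvec D x" and "\<And>v. D x v = inner (gvec D x) v"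
proof -
  have lin: "linear (D x)" using assms by (simp add: has_derivative_linear)
  show rep: "\<And>v. D x v = inner (gvec D x) v" unfolding gvec_def by (rule riesz_repr[OF lin])
  have d: "(L has_derivative (\<lambda>v. inner (gvec D x) v)) (at x)"
  proof -
    have eq: "(\<lambda>v. inner (gvec D x) v) = D x" by (rule ext) (simp add: rep)
    show ?thesis unfolding eq by (rule assms)
  qed
  show "grad L x = gvec D x"
    unfolding grad_def
  proof (rule the_equality)
    show "(L has_derivative (\<lambda>v. inner (gvec D x) v)) (at x)" by (rule d)
    fix G assume G: "(L has_derivative (\<lambda>v. inner G v)) (at x)"
    have "(\<lambda>v. inner G v) = (\<lambda>v. inner (gvec D x) v)" by (rule has_derivative_unique[OF G d])
    hence "inner G (G - gvec D x) = inner (gvec D x) (G - gvec D x)" by metis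
    hence "inner (G - gvec D x) (G - gvec D x) = 0" by (simp add: inner_diff_left)
    thus "G = gvec D x" by simp
  qed
qed

lemma smooth_descent:
  fixes L :: "'a::real_normed_vector \<Rightarrow> real"
  assumes d: "\<And>x. x \<in> S \<Longrightarrow> (L has_derivative D x) (at x)"
    and lipD: "\<And>x y v. x \<in> S \<Longrightarrow> y \<in> S \<Longrightarrow> norm (D x v - D y v) \<le> K * norm (x - y) * norm v"
    and S: "convex S" and x: "x \<in> S" and y: "y \<in> S" and K: "K \<ge> 0"
  shows "\<bar>L y - L x - D x (y - x)\<bar> \<le> K * (norm (y - x))\<^sup>2"
proof -
  define p where "p t = x + t *\<^sub>R (y - x)" for t :: real
  have pS: "p t \<in> S" if "t \<in> {0..1}" for t
  proof -
    have "p t = (1 - t) *\<^sub>R x + t *\<^sub>R y" unfolding p_def by (simp add: algebra_simps)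
    thus ?thesis using S x y that by (simp add: convex_def)
  qed
  have der: "((\<lambda>t. L (p t)) has_real_derivative D (p t) (y - x)) (at t)" if "t \<in> {0..1}" for t
  proof -
    have dp: "(p has_derivative (\<lambda>s. s *\<^sub>R (y - x))) (at t)" unfolding p_def
      by (auto intro!: derivative_eq_intros)
    have lin: "linear (D (p t))" using d[OF pS[OF that]] by (simp add: has_derivative_linear)
    have "((\<lambda>t. L (p t)) has_derivative (\<lambda>s. D (p t) (s *\<^sub>R (y - x)))) (at t)"
      using has_derivative_compose[OF dp d[OF pS[OF that]]] by simp
    moreover have "(\<lambda>s. D (p t) (s *\<^sub>R (y - x))) = (\<lambda>s. D (p t) (y - x) * s)"
      using lin by (simp add: linear_scale mult.commute)
    ultimately show ?thesis by (simp add: has_field_derivative_def)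
  qed
  show ?thesis
  proof (cases "x = y")
    case True then show ?thesis
      using d[OF x] by (simp add: has_derivative_linear linear_0)
  next
    case False
    have "\<exists>z. 0 < z \<and> z < 1 \<and> L (p 1) - L (p 0) = (1 - 0) * D (p z) (y - x)"
      by (rule MVT2) (use der in auto)
    then obtain z where z: "0 < z" "z < 1" "L (p 1) - L (p 0) = (1 - 0) * D (p z) (y - x)"
      by blast
    have p01: "p 0 = x" "p 1 = y" unfolding p_def by auto
    have zS: "p z \<in> S" using pS z by auto
    have "\<bar>L y - L x - D x (y - x)\<bar> = \<bar>D (p z) (y - x) - D x (y - x)\<bar>" using z p01 by simp
    also have "\<dots> \<le> K * norm (p z - x) * norm (y - x)" using lipD[OF zS x] by simp
    also have "norm (p z - x) = z * norm (y - x)" unfolding p_def using z by simp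
    also have "K * (z * norm (y - x)) * norm (y - x) \<le> K * (1 * norm (y - x)) * norm (y - x)"
      using z K by (intro mult_right_mono mult_left_mono) auto
    finally show ?thesis by (simp add: power2_eq_square mult.assoc)
  qed
qed

lemma first_order_min:
  fixes L :: "'a::real_normed_vector \<Rightarrow> real"
  assumes d: "(L has_derivative D) (at x)"
    and T: "convex T" and x: "x \<in> T" and y: "y \<in> T"
    and min: "\<And>z. z \<in> T \<Longrightarrow> L x \<le> L z"
  shows "D (y - x) \<ge> 0"
proof (rule ccontr)
  assume neg: "\<not> D (y - x) \<ge> 0"
  define p where "p t = x + t *\<^sub>R (y - x)" for t :: real
  have lin: "linear D" using d by (simp add: has_derivative_linear)
  have dp: "(p has_derivative (\<lambda>s. s *\<^sub>R (y - x))) (at 0)" unfolding p_def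
    by (auto intro!: derivative_eq_intros)
  have p0: "p 0 = x" unfolding p_def by simp
  have d': "(L has_derivative D) (at (p 0))" using d by (simp only: p0)
  have "((\<lambda>t. L (p t)) has_derivative (\<lambda>s. D (s *\<^sub>R (y - x)))) (at 0)"
    using has_derivative_compose[OF dp d'] by simp
  moreover have "(\<lambda>s. D (s *\<^sub>R (y - x))) = (\<lambda>s. D (y - x) * s)"
    using lin by (simp add: linear_scale mult.commute)
  ultimately have "DERIV (\<lambda>t. L (p t)) 0 :> D (y - x)" by (simp add: has_field_derivative_def)
  from DERIV_neg_dec_right[OF this] neg obtain e where e0: "e > 0" and
    e1: "\<forall>h>0. h < e \<longrightarrow> L (p 0) > L (p (0 + h))" by auto
  have e: "e > 0" "\<And>h. h > 0 \<Longrightarrow> h < e \<Longrightarrow> L (p 0) > L (p (0 + h))" using e0 e1 by auto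
  define h where "h = min (e / 2) 1"
  have h: "h > 0" "h < e" "h \<le> 1" unfolding h_def using e by auto
  have "p h = (1 - h) *\<^sub>R x + h *\<^sub>R y" unfolding p_def by (simp add: algebra_simps)
  hence "p h \<in> T" using T x y h by (simp add: convex_def)
  moreover have "L (p h) < L x" using e(2)[OF h(1) h(2)] by (simp add: p_def)
  ultimately show False using min by fastforce
qed


lemma block_step:
  fixes L :: "'a::real_normed_vector \<Rightarrow> real"
  assumes d: "\<And>x. x \<in> \<Theta> \<Longrightarrow> (L has_derivative D x) (at x)"
    and lipD: "\<And>x y v. x \<in> \<Theta> \<Longrightarrow> y \<in> \<Theta> \<Longrightarrow> norm (D x v - D y v) \<le> K * norm (x - y) * norm v"
    and \<Theta>: "convex \<Theta>" and K: "K \<ge> 0" and S\<Theta>: "S \<subseteq> \<Theta>" and S: "convex S"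
    and Yp: "Yp \<in> S" and Yn: "Yn \<in> S" "dist Yn Yp \<le> r" and r: "r > 0"
    and min: "\<And>Y. Y \<in> S \<Longrightarrow> dist Y Yp \<le> r \<Longrightarrow> L Yn \<le> L Y"
    and Y': "Y' \<in> S"
  shows "- D Yn (Y' - Yn) \<le> norm (Y' - Yn) * ((L Yp - L Yn) / r + K * r)"
proof -
  have dn: "(L has_derivative D Yn) (at Yn)" using d Yn S\<Theta> by blast
  have lin: "linear (D Yn)" using dn by (simp add: has_derivative_linear)
  define Dn where "Dn = norm (Y' - Yn)"
  have desc: "\<bar>L Yp - L Yn - D Yn (Yp - Yn)\<bar> \<le> K * (norm (Yp - Yn))\<^sup>2"
    by (rule smooth_descent[OF d lipD \<Theta>]) (use Yn Yp S\<Theta> K in auto)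
  have "norm (Yp - Yn) \<le> r" using Yn by (simp add: dist_norm norm_minus_commute)
  hence "(norm (Yp - Yn))\<^sup>2 \<le> r\<^sup>2" by (simp add: power_mono)
  hence "K * (norm (Yp - Yn))\<^sup>2 \<le> K * r\<^sup>2" using K by (simp add: mult_left_mono)
  hence desc2: "D Yn (Yp - Yn) \<le> L Yp - L Yn + K * r\<^sup>2" using desc by linarith
  show ?thesis
  proof (cases "Dn = 0")
    case True
    hence "Y' = Yn" unfolding Dn_def by simp
    then show ?thesis using lin by (simp add: linear_0)
  next
    case False
    hence Dpos: "Dn > 0" unfolding Dn_def by simp
    define \<theta> where "\<theta> = r / (r + Dn)"
    define \<beta> where "\<beta> = Dn / (r + Dn)"
    have rD: "r + Dn > 0" using r Dpos by simp
    have tb: "\<theta> \<ge> 0" "\<beta> \<ge> 0" "\<theta> + \<beta> = 1" unfolding \<theta>_def \<beta>_def using r Dpos rD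
      by (auto simp: add_divide_distrib[symmetric])
    define P where "P = \<theta> *\<^sub>R Y' + \<beta> *\<^sub>R Yp"
    have PS: "P \<in> S" unfolding P_def using S Y' Yp tb by (simp add: convex_def)
    have "P - Yp = \<theta> *\<^sub>R (Y' - Yp)" unfolding P_def using tb
      by (simp add: algebra_simps) (metis add_diff_cancel_left' scaleR_add_left scaleR_one)
    hence "norm (P - Yp) = \<theta> * norm ((Y' - Yn) + (Yn - Yp))" using tb by simp
    also have "\<dots> \<le> \<theta> * (Dn + r)"
    proof -
      have "norm ((Y' - Yn) + (Yn - Yp)) \<le> norm (Y' - Yn) + norm (Yn - Yp)" by (rule norm_triangle_ineq)
      also have "\<dots> \<le> Dn + r" using Yn(2) by (simp add: Dn_def dist_norm)
      finally show ?thesis using tb by (intro mult_left_mono) auto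
    qed
    also have "\<theta> * (Dn + r) = r" unfolding \<theta>_def using r Dpos by (simp add: field_simps)
    finally have Pd: "dist P Yp \<le> r" by (simp add: dist_norm)
    have T: "convex (S \<inter> cball Yp r)" by (intro convex_Int S convex_cball)
    have fo: "D Yn (P - Yn) \<ge> 0"
    proof (rule first_order_min[OF dn T])
      show "Yn \<in> S \<inter> cball Yp r" using Yn by (simp add: dist_commute)
      show "P \<in> S \<inter> cball Yp r" using PS Pd by (simp add: dist_commute)
      show "L Yn \<le> L z" if "z \<in> S \<inter> cball Yp r" for z using min that by (simp add: dist_commute)
    qed
    have "P - Yn = \<theta> *\<^sub>R (Y' - Yn) + \<beta> *\<^sub>R (Yp - Yn)" unfolding P_def using tb
      by (simp add: algebra_simps) (metis add_diff_cancel_left' scaleR_add_left scaleR_one)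
    hence "D Yn (P - Yn) = \<theta> * D Yn (Y' - Yn) + \<beta> * D Yn (Yp - Yn)"
      using lin by (simp add: linear_add linear_scale)
    hence "(r + Dn) * D Yn (P - Yn) = ((r + Dn) * \<theta>) * D Yn (Y' - Yn) + ((r + Dn) * \<beta>) * D Yn (Yp - Yn)"
      by (simp add: distrib_left mult.assoc)
    moreover have "(r + Dn) * \<theta> = r" using rD by (simp add: \<theta>_def)
    moreover have "(r + Dn) * \<beta> = Dn" using rD by (simp add: \<beta>_def)
    ultimately have eq: "(r + Dn) * D Yn (P - Yn) = r * D Yn (Y' - Yn) + Dn * D Yn (Yp - Yn)"
      by simp
    have "(r + Dn) * D Yn (P - Yn) \<ge> 0" using rD fo by simp
    hence key: "r * D Yn (Y' - Yn) + Dn * D Yn (Yp - Yn) \<ge> 0" using eq by simp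
    have "Dn * D Yn (Yp - Yn) \<le> Dn * (L Yp - L Yn + K * r\<^sup>2)" using desc2 Dpos by (simp add: mult_left_mono)
    hence "- D Yn (Y' - Yn) * r \<le> Dn * (L Yp - L Yn + K * r\<^sup>2)" using key by (simp add: algebra_simps)
    hence "- D Yn (Y' - Yn) \<le> Dn * (L Yp - L Yn + K * r\<^sup>2) / r" using r by (simp add: field_simps)
    also have "\<dots> = Dn * ((L Yp - L Yn) / r + K * r)" using r by (simp add: field_simps power2_eq_square)
    finally show ?thesis unfolding Dn_def .
  qed
qed


lemma norm4_le: "norm (a, b, c, d) \<le> norm a + norm b + norm c + norm d"
proof -
  have "norm (a, b, c, d) \<le> norm a + norm (b, c, d)" by (rule norm_Pair_le)
  also have "norm (b, c, d) \<le> norm b + norm (c, d)" by (rule norm_Pair_le)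
  also have "norm (c, d) \<le> norm c + norm d" by (rule norm_Pair_le)
  finally show ?thesis by simp
qed

lemma norm4_1: "norm a \<le> norm (a, b, c, d)" by (rule norm_fst_le)
lemma norm4_2: "norm b \<le> norm (a, b, c, d)" using norm_fst_le[of b "(c,d)"] norm_snd_le[of "(b,c,d)" a] by linarith
lemma norm4_3: "norm c \<le> norm (a, b, c, d)"
  using norm_fst_le[of c d] norm_snd_le[of "(c,d)" b] norm_snd_le[of "(b,c,d)" a] by linarith
lemma norm4_4: "norm d \<le> norm (a, b, c, d)"
  using norm_snd_le[of d c] norm_snd_le[of "(c,d)" b] norm_snd_le[of "(b,c,d)" a] by linarith

lemma block_combine:
  fixes L :: "'a::real_normed_vector \<Rightarrow> real"
  assumes d: "\<And>x. x \<in> \<Theta> \<Longrightarrow> (L has_derivative D x) (at x)"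
    and lipD: "\<And>x y v. x \<in> \<Theta> \<Longrightarrow> y \<in> \<Theta> \<Longrightarrow> norm (D x v - D y v) \<le> K * norm (x - y) * norm v"
    and \<Theta>: "convex \<Theta>" and K: "K \<ge> 0" and S\<Theta>: "S \<subseteq> \<Theta>" and S: "convex S"
    and Yp: "Yp \<in> S" and Yn: "Yn \<in> S" "dist Yn Yp \<le> r" and r: "r > 0"
    and min: "\<And>Y. Y \<in> S \<Longrightarrow> dist Y Yp \<le> r \<Longrightarrow> L Yn \<le> L Y"
    and Y': "Yn + e \<in> S" and Z: "Z \<in> \<Theta>" and ZY: "norm (Z - Yn) \<le> 3 * r"
    and eN: "norm e \<le> N"
  shows "- D Z e \<le> N * ((L Yp - L Yn) / r + 4 * K * r)" and "L Yn \<le> L Yp"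
proof -
  show mono: "L Yn \<le> L Yp" using min[OF Yp] r by simp
  have b: "- D Yn e \<le> norm e * ((L Yp - L Yn) / r + K * r)"
    using block_step[OF d lipD \<Theta> K S\<Theta> S Yp Yn r min Y'] by simp
  have "norm (D Z e - D Yn e) \<le> K * norm (Z - Yn) * norm e" using lipD Z Yn S\<Theta> by blast
  also have "\<dots> \<le> K * (3 * r) * norm e" using K ZY by (intro mult_right_mono mult_left_mono) auto
  finally have c: "- D Z e \<le> - D Yn e + K * (3 * r) * norm e" by (smt (verit) norm_ge_zero real_norm_def abs_le_iff)
  have "- D Z e \<le> norm e * ((L Yp - L Yn) / r + 4 * K * r)" using b c by (simp add: algebra_simps)
  also have "\<dots> \<le> N * ((L Yp - L Yn) / r + 4 * K * r)"
    using eN mono r K by (intro mult_right_mono) auto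
  finally show "- D Z e \<le> N * ((L Yp - L Yn) / r + 4 * K * r)" .
qed

lemma dist_slice1: "dist (W, H, b, G) (W', H, b, G) = dist W W'"
  by (simp add: dist_Pair_Pair)
lemma dist_slice2: "dist (W, H, b, G) (W, H', b, G) = dist H H'"
  by (simp add: dist_Pair_Pair)
lemma dist_slice3: "dist (W, H, b, G) (W, H, b', G) = dist b b'"
  by (simp add: dist_Pair_Pair)
lemma dist_slice4: "dist (W, H, b, G) (W, H, b, G') = dist G G'"
  by (simp add: dist_Pair_Pair)

lemma argmin_le:
  fixes f :: "'a \<Rightarrow> real"
  assumes "is_arg_min f P x" "P y" shows "f x \<le> f y"
  using assms unfolding is_arg_min_def by (metis leI)

lemma bcd_step:
  fixes L :: "('a::real_normed_vector \<times> 'b::real_normed_vector \<times> 'c::real_normed_vector \<times> 'd::real_normed_vector) \<Rightarrow> real"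
  assumes d: "\<And>x. x \<in> CW \<times> CH \<times> Cb \<times> CG \<Longrightarrow> (L has_derivative D x) (at x)"
    and lipD: "\<And>x y v. x \<in> CW \<times> CH \<times> Cb \<times> CG \<Longrightarrow> y \<in> CW \<times> CH \<times> Cb \<times> CG \<Longrightarrow> norm (D x v - D y v) \<le> K * norm (x - y) * norm v"
    and cv: "convex CW" "convex CH" "convex Cb" "convex CG" and K: "K \<ge> 0" and r: "r > 0"
    and Z0: "W0 \<in> CW" "H0 \<in> CH" "b0 \<in> Cb" "G0 \<in> CG"
    and m1: "is_arg_min (\<lambda>W. L (W, H0, b0, G0)) (\<lambda>W. W \<in> CW \<and> dist W W0 \<le> r) W1"
    and m2: "is_arg_min (\<lambda>b. L (W1, H0, b, G0)) (\<lambda>b. b \<in> Cb \<and> dist b b0 \<le> r) b1"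
    and m3: "is_arg_min (\<lambda>G. L (W1, H0, b1, G)) (\<lambda>G. G \<in> CG \<and> dist G G0 \<le> r) G1"
    and m4: "is_arg_min (\<lambda>H. L (W1, H, b1, G1)) (\<lambda>H. H \<in> CH \<and> dist H H0 \<le> r) H1"
  shows "(W1, H1, b1, G1) \<in> CW \<times> CH \<times> Cb \<times> CG"
    and "L (W1, H1, b1, G1) \<le> L (W0, H0, b0, G0)"
    and "norm ((W1, H1, b1, G1) - (W0, H0, b0, G0)) \<le> 4 * r"
    and "\<And>Z'. Z' \<in> CW \<times> CH \<times> Cb \<times> CG \<Longrightarrow> - D (W1, H1, b1, G1) (Z' - (W1, H1, b1, G1)) \<le>
          norm (Z' - (W1, H1, b1, G1)) * ((L (W0, H0, b0, G0) - L (W1, H1, b1, G1)) / r + 16 * K * r)"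
proof -
  let ?T = "CW \<times> CH \<times> Cb \<times> CG"
  have T: "convex ?T" using cv by (intro convex_Times) auto
  have W1: "W1 \<in> CW" "dist W1 W0 \<le> r" using m1 unfolding is_arg_min_def by auto
  have b1: "b1 \<in> Cb" "dist b1 b0 \<le> r" using m2 unfolding is_arg_min_def by auto
  have G1: "G1 \<in> CG" "dist G1 G0 \<le> r" using m3 unfolding is_arg_min_def by auto
  have H1: "H1 \<in> CH" "dist H1 H0 \<le> r" using m4 unfolding is_arg_min_def by auto
  show Z1: "(W1, H1, b1, G1) \<in> ?T" using W1 b1 G1 H1 by simp
  define S1 where "S1 = CW \<times> {H0} \<times> {b0} \<times> {G0}"
  define S2 where "S2 = {W1} \<times> {H0} \<times> Cb \<times> {G0}"
  define S3 where "S3 = {W1} \<times> {H0} \<times> {b1} \<times> CG"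
  define S4 where "S4 = {W1} \<times> CH \<times> {b1} \<times> {G1}"
  have S1: "convex S1" "S1 \<subseteq> ?T" unfolding S1_def using cv Z0 by (auto intro!: convex_Times)
  have S2: "convex S2" "S2 \<subseteq> ?T" unfolding S2_def using cv Z0 W1 by (auto intro!: convex_Times)
  have S3: "convex S3" "S3 \<subseteq> ?T" unfolding S3_def using cv Z0 W1 b1 by (auto intro!: convex_Times)
  have S4: "convex S4" "S4 \<subseteq> ?T" unfolding S4_def using cv Z0 W1 b1 G1 by (auto intro!: convex_Times)
  have min1: "L (W1, H0, b0, G0) \<le> L Y" if "Y \<in> S1" "dist Y (W0, H0, b0, G0) \<le> r" for Y
  proof -
    from that obtain W where Y: "Y = (W, H0, b0, G0)" "W \<in> CW" unfolding S1_def by auto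
    show ?thesis using argmin_le[OF m1, of W] Y that(2) by (simp add: dist_slice1)
  qed
  have min2: "L (W1, H0, b1, G0) \<le> L Y" if "Y \<in> S2" "dist Y (W1, H0, b0, G0) \<le> r" for Y
  proof -
    from that obtain b where Y: "Y = (W1, H0, b, G0)" "b \<in> Cb" unfolding S2_def by auto
    show ?thesis using argmin_le[OF m2, of b] Y that(2) by (simp add: dist_slice3)
  qed
  have min3: "L (W1, H0, b1, G1) \<le> L Y" if "Y \<in> S3" "dist Y (W1, H0, b1, G0) \<le> r" for Y
  proof -
    from that obtain G where Y: "Y = (W1, H0, b1, G)" "G \<in> CG" unfolding S3_def by auto
    show ?thesis using argmin_le[OF m3, of G] Y that(2) by (simp add: dist_slice4)
  qed
  have min4: "L (W1, H1, b1, G1) \<le> L Y" if "Y \<in> S4" "dist Y (W1, H0, b1, G1) \<le> r" for Y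
  proof -
    from that obtain H where Y: "Y = (W1, H, b1, G1)" "H \<in> CH" unfolding S4_def by auto
    show ?thesis using argmin_le[OF m4, of H] Y that(2) by (simp add: dist_slice2)
  qed
  have l1: "L (W1, H0, b0, G0) \<le> L (W0, H0, b0, G0)" using min1[of "(W0, H0, b0, G0)"] Z0 r unfolding S1_def by simp
  have l2: "L (W1, H0, b1, G0) \<le> L (W1, H0, b0, G0)" using min2[of "(W1, H0, b0, G0)"] Z0 W1 r unfolding S2_def by simp
  have l3: "L (W1, H0, b1, G1) \<le> L (W1, H0, b1, G0)" using min3[of "(W1, H0, b1, G0)"] Z0 W1 b1 r unfolding S3_def by simp
  have l4: "L (W1, H1, b1, G1) \<le> L (W1, H0, b1, G1)" using min4[of "(W1, H0, b1, G1)"] Z0 W1 b1 G1 r unfolding S4_def by simp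
  show "L (W1, H1, b1, G1) \<le> L (W0, H0, b0, G0)" using l1 l2 l3 l4 by linarith
  have nW: "norm (W1 - W0) \<le> r" and nH: "norm (H1 - H0) \<le> r" and nb: "norm (b1 - b0) \<le> r" and nG: "norm (G1 - G0) \<le> r"
    using W1 H1 b1 G1 by (simp_all add: dist_norm)
  show "norm ((W1, H1, b1, G1) - (W0, H0, b0, G0)) \<le> 4 * r"
    using norm4_le[of "W1 - W0" "H1 - H0" "b1 - b0" "G1 - G0"] nW nH nb nG by simp
  fix Z' assume Z': "Z' \<in> ?T"
  then obtain W' H' b' G' where Z'e: "Z' = (W', H', b', G')" and Z'm: "W' \<in> CW" "H' \<in> CH" "b' \<in> Cb" "G' \<in> CG" by auto
  define N where "N = norm (Z' - (W1, H1, b1, G1))"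
  have Neq: "N = norm (W' - W1, H' - H1, b' - b1, G' - G1)" unfolding N_def Z'e by simp
  define e1 where "e1 = (W' - W1, 0::'b, 0::'c, 0::'d)"
  define e2 where "e2 = (0::'a, 0::'b, b' - b1, 0::'d)"
  define e3 where "e3 = (0::'a, 0::'b, 0::'c, G' - G1)"
  define e4 where "e4 = (0::'a, H' - H1, 0::'c, 0::'d)"
  have e1N: "norm e1 \<le> N" unfolding e1_def Neq using norm4_1[of "W' - W1" "H' - H1" "b' - b1" "G' - G1"]
    norm4_le[of "W' - W1" "0::'b" "0::'c" "0::'d"] by simp
  have e2N: "norm e2 \<le> N" unfolding e2_def Neq using norm4_3[of "b' - b1" "W' - W1" "H' - H1" "G' - G1"]
    norm4_le[of "0::'a" "0::'b" "b' - b1" "0::'d"] by simp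
  have e3N: "norm e3 \<le> N" unfolding e3_def Neq using norm4_4[of "G' - G1" "W' - W1" "H' - H1" "b' - b1"]
    norm4_le[of "0::'a" "0::'b" "0::'c" "G' - G1"] by simp
  have e4N: "norm e4 \<le> N" unfolding e4_def Neq using norm4_2[of "H' - H1" "W' - W1" "b' - b1" "G' - G1"]
    norm4_le[of "0::'a" "H' - H1" "0::'c" "0::'d"] by simp
  have ZY1: "norm ((W1, H1, b1, G1) - (W1, H0, b0, G0)) \<le> 3 * r"
    using norm4_le[of "0::'a" "H1 - H0" "b1 - b0" "G1 - G0"] nH nb nG by simp
  have ZY2: "norm ((W1, H1, b1, G1) - (W1, H0, b1, G0)) \<le> 3 * r"
    using norm4_le[of "0::'a" "H1 - H0" "0::'c" "G1 - G0"] nH nG r by simp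
  have ZY3: "norm ((W1, H1, b1, G1) - (W1, H0, b1, G1)) \<le> 3 * r"
    using norm4_le[of "0::'a" "H1 - H0" "0::'c" "0::'d"] nH r by simp
  have ZY4: "norm ((W1, H1, b1, G1) - (W1, H1, b1, G1)) \<le> 3 * r" using r by simp
  have c1: "- D (W1, H1, b1, G1) e1 \<le> N * ((L (W0, H0, b0, G0) - L (W1, H0, b0, G0)) / r + 4 * K * r)"
    by (rule block_combine(1)[OF d lipD T K S1(2) S1(1) _ _ _ r min1 _ Z1 ZY1 e1N])
       (use Z0 W1 Z'm in \<open>auto simp: S1_def e1_def dist_slice1\<close>)
  have c2: "- D (W1, H1, b1, G1) e2 \<le> N * ((L (W1, H0, b0, G0) - L (W1, H0, b1, G0)) / r + 4 * K * r)"
    by (rule block_combine(1)[OF d lipD T K S2(2) S2(1) _ _ _ r min2 _ Z1 ZY2 e2N])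
       (use Z0 W1 b1 Z'm in \<open>auto simp: S2_def e2_def dist_slice3\<close>)
  have c3: "- D (W1, H1, b1, G1) e3 \<le> N * ((L (W1, H0, b1, G0) - L (W1, H0, b1, G1)) / r + 4 * K * r)"
    by (rule block_combine(1)[OF d lipD T K S3(2) S3(1) _ _ _ r min3 _ Z1 ZY3 e3N])
       (use Z0 W1 b1 G1 Z'm in \<open>auto simp: S3_def e3_def dist_slice4\<close>)
  have c4: "- D (W1, H1, b1, G1) e4 \<le> N * ((L (W1, H0, b1, G1) - L (W1, H1, b1, G1)) / r + 4 * K * r)"
    by (rule block_combine(1)[OF d lipD T K S4(2) S4(1) _ _ _ r min4 _ Z1 ZY4 e4N])
       (use Z0 W1 b1 G1 H1 Z'm in \<open>auto simp: S4_def e4_def dist_slice2\<close>)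
  have lin: "linear (D (W1, H1, b1, G1))" using d[OF Z1] by (simp add: has_derivative_linear)
  have "Z' - (W1, H1, b1, G1) = e1 + e2 + e3 + e4" unfolding Z'e e1_def e2_def e3_def e4_def by simp
  hence "D (W1, H1, b1, G1) (Z' - (W1, H1, b1, G1)) = D (W1, H1, b1, G1) e1 + D (W1, H1, b1, G1) e2 + D (W1, H1, b1, G1) e3 + D (W1, H1, b1, G1) e4"
    using lin by (simp add: linear_add)
  hence "- D (W1, H1, b1, G1) (Z' - (W1, H1, b1, G1)) \<le>
      N * ((L (W0, H0, b0, G0) - L (W1, H0, b0, G0)) / r + 4 * K * r) +
      N * ((L (W1, H0, b0, G0) - L (W1, H0, b1, G0)) / r + 4 * K * r) +
      N * ((L (W1, H0, b1, G0) - L (W1, H0, b1, G1)) / r + 4 * K * r) +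
      N * ((L (W1, H0, b1, G1) - L (W1, H1, b1, G1)) / r + 4 * K * r)"
    using c1 c2 c3 c4 by linarith
  also have "\<dots> = N * ((L (W0, H0, b0, G0) - L (W1, H1, b1, G1)) / r + 16 * K * r)"
    using r by (simp add: field_simps)
  finally show "- D (W1, H1, b1, G1) (Z' - (W1, H1, b1, G1)) \<le>
          norm (Z' - (W1, H1, b1, G1)) * ((L (W0, H0, b0, G0) - L (W1, H1, b1, G1)) / r + 16 * K * r)"
    unfolding N_def .
qed


lemma stat_bdd:
  fixes G :: "'a::real_inner"
  shows "- norm G \<le> inner G ((1 / norm (Z' - Z)) *\<^sub>R (Z' - Z))"
proof -
  have "norm ((1 / norm (Z' - Z)) *\<^sub>R (Z' - Z)) \<le> 1"
    by (cases "Z' = Z") auto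
  hence "\<bar>inner G ((1 / norm (Z' - Z)) *\<^sub>R (Z' - Z))\<bar> \<le> norm G"
    using Cauchy_Schwarz_ineq2[of G "(1 / norm (Z' - Z)) *\<^sub>R (Z' - Z)"]
    by (meson mult_left_le norm_ge_zero order_trans)
  thus ?thesis by linarith
qed

lemma stat_measure_nonneg:
  assumes "Z \<in> \<Theta>"
  shows "0 \<le> stat_measure L \<Theta> Z"
proof -
  have "(INF Z'\<in>\<Theta>. inner (grad L Z) ((1 / norm (Z' - Z)) *\<^sub>R (Z' - Z))) \<le> inner (grad L Z) ((1 / norm (Z - Z)) *\<^sub>R (Z - Z))"
    by (rule cINF_lower[OF bdd_belowI2[where m="- norm (grad L Z)"] assms]) (rule stat_bdd)
  thus ?thesis unfolding stat_measure_def by simp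
qed

lemma stat_measure_le:
  assumes Z: "Z \<in> \<Theta>" and c: "c \<ge> 0"
    and b: "\<And>Z'. Z' \<in> \<Theta> \<Longrightarrow> - inner (grad L Z) (Z' - Z) \<le> norm (Z' - Z) * c"
  shows "stat_measure L \<Theta> Z \<le> c"
proof -
  have "- c \<le> (INF Z'\<in>\<Theta>. inner (grad L Z) ((1 / norm (Z' - Z)) *\<^sub>R (Z' - Z)))"
  proof (rule cINF_greatest)
    show "\<Theta> \<noteq> {}" using Z by auto
    fix Z' assume Z': "Z' \<in> \<Theta>"
    show "- c \<le> inner (grad L Z) ((1 / norm (Z' - Z)) *\<^sub>R (Z' - Z))"
    proof (cases "Z' = Z")
      case True then show ?thesis using c by simp
    next
      case False
      hence N: "norm (Z' - Z) > 0" by simp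
      have "(- inner (grad L Z) (Z' - Z)) / norm (Z' - Z) \<le> c" by (subst pos_divide_le_eq[OF N]) (use b[OF Z'] in \<open>simp add: mult.commute\<close>)
      moreover have "inner (grad L Z) ((1 / norm (Z' - Z)) *\<^sub>R (Z' - Z)) = inner (grad L Z) (Z' - Z) / norm (Z' - Z)"
        by simp
      moreover have "(- inner (grad L Z) (Z' - Z)) / norm (Z' - Z) = - (inner (grad L Z) (Z' - Z) / norm (Z' - Z))"
        by simp
      ultimately show ?thesis by linarith
    qed
  qed
  thus ?thesis unfolding stat_measure_def by simp
qed


lemma grad_lip:
  fixes L :: "'a::euclidean_space \<Rightarrow> real"
  assumes d: "\<And>x. x \<in> S \<Longrightarrow> (L has_derivative D x) (at x)"
    and lipD: "\<And>x y v. x \<in> S \<Longrightarrow> y \<in> S \<Longrightarrow> norm (D x v - D y v) \<le> K * norm (x - y) * norm v"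
    and x: "x \<in> S" and y: "y \<in> S" and K: "K \<ge> 0"
  shows "norm (grad L x - grad L y) \<le> K * norm (x - y)"
proof -
  define w where "w = grad L x - grad L y"
  have "D x w = inner (grad L x) w" using grad_eq[where L=L and D=D and x=x, OF d[OF x]] by simp
  moreover have "D y w = inner (grad L y) w" using grad_eq[where L=L and D=D and x=y, OF d[OF y]] by simp
  ultimately have "(norm w)\<^sup>2 = D x w - D y w" unfolding w_def by (simp add: power2_norm_eq_inner inner_diff_left)
  also have "\<dots> \<le> K * norm (x - y) * norm w" using lipD[OF x y, of w] by simp
  finally have *: "norm w * norm w \<le> (K * norm (x - y)) * norm w" by (simp add: power2_eq_square)
  show ?thesis
  proof (cases "norm w = 0")
    case True then show ?thesis unfolding w_def using K by simp
  next
    case False then show ?thesis using * unfolding w_def by (simp add: mult_le_cancel_right)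
  qed
qed

lemma bcd_facts:
  fixes L :: "('a::euclidean_space \<times> 'b::euclidean_space \<times> 'c::euclidean_space \<times> 'd::euclidean_space) \<Rightarrow> real"
  assumes sm: "smooth_on (CW \<times> CH \<times> Cb \<times> CG) L D"
    and cv: "convex CW" "convex CH" "convex Cb" "convex CG"
    and r_pos: "\<forall>t\<ge>1. r t > 0" and iter: "bcd_dr L CW CH Cb CG r Z"
  obtains K where "K > 0"
    "\<And>k. Z k \<in> CW \<times> CH \<times> Cb \<times> CG"
    "\<And>k. k \<ge> 1 \<Longrightarrow> L (Z k) \<le> L (Z (k - 1))"
    "\<And>k. k \<ge> 1 \<Longrightarrow> norm (Z k - Z (k - 1)) \<le> 4 * r k"
    "\<And>k. k \<ge> 1 \<Longrightarrow> r k * stat_measure L (CW \<times> CH \<times> Cb \<times> CG) (Z k) \<le> L (Z (k - 1)) - L (Z k) + 16 * K * (r k)\<^sup>2"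
    "\<And>x. x \<in> CW \<times> CH \<times> Cb \<times> CG \<Longrightarrow> \<bar>L x\<bar> \<le> K"
    "\<And>x y. x \<in> CW \<times> CH \<times> Cb \<times> CG \<Longrightarrow> y \<in> CW \<times> CH \<times> Cb \<times> CG \<Longrightarrow> norm (grad L x - grad L y) \<le> K * norm (x - y)"
proof -
  let ?T = "CW \<times> CH \<times> Cb \<times> CG"
  obtain K where K: "K > 0"
    "\<And>x. x \<in> ?T \<Longrightarrow> (L has_derivative D x) (at x)"
    "\<And>x. x \<in> ?T \<Longrightarrow> norm (L x) \<le> K"
    "\<And>x y. x \<in> ?T \<Longrightarrow> y \<in> ?T \<Longrightarrow> norm (L x - L y) \<le> K * norm (x - y)"
    "\<And>x v. x \<in> ?T \<Longrightarrow> norm (D x v) \<le> K * norm v"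
    "\<And>x y v. x \<in> ?T \<Longrightarrow> y \<in> ?T \<Longrightarrow> norm (D x v - D y v) \<le> K * norm (x - y) * norm v"
    using smooth_onE[OF sm] by blast
  have Z0: "Z 0 \<in> ?T" using iter unfolding bcd_dr_def by blast
  have step: "Z k \<in> ?T \<and> L (Z k) \<le> L (Z (k - 1)) \<and> norm (Z k - Z (k - 1)) \<le> 4 * r k \<and>
      (\<forall>Z'\<in>?T. - D (Z k) (Z' - Z k) \<le> norm (Z' - Z k) * ((L (Z (k - 1)) - L (Z k)) / r k + 16 * K * r k))"
    if k: "k \<ge> 1" and prev: "Z (k - 1) \<in> ?T" for k
  proof -
    obtain W0 H0 b0 G0 where e0: "Z (k - 1) = (W0, H0, b0, G0)" by (cases "Z (k - 1)") auto
    obtain W1 H1 b1 G1 where e1: "Z k = (W1, H1, b1, G1)" by (cases "Z k") auto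
    have it: "is_arg_min (\<lambda>W. L (W, H0, b0, G0)) (\<lambda>W. W \<in> CW \<and> dist W W0 \<le> r k) W1 \<and>
        is_arg_min (\<lambda>b. L (W1, H0, b, G0)) (\<lambda>b. b \<in> Cb \<and> dist b b0 \<le> r k) b1 \<and>
        is_arg_min (\<lambda>G. L (W1, H0, b1, G)) (\<lambda>G. G \<in> CG \<and> dist G G0 \<le> r k) G1 \<and>
        is_arg_min (\<lambda>H. L (W1, H, b1, G1)) (\<lambda>H. H \<in> CH \<and> dist H H0 \<le> r k) H1"
    proof -
      have all: "\<forall>k\<ge>1. case Z (k - 1) of (W0, H0, b0, G0) \<Rightarrow> (case Z k of (W1, H1, b1, G1) \<Rightarrow>
        is_arg_min (\<lambda>W. L (W, H0, b0, G0)) (\<lambda>W. W \<in> CW \<and> dist W W0 \<le> r k) W1 \<and>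
        is_arg_min (\<lambda>b. L (W1, H0, b, G0)) (\<lambda>b. b \<in> Cb \<and> dist b b0 \<le> r k) b1 \<and>
        is_arg_min (\<lambda>G. L (W1, H0, b1, G)) (\<lambda>G. G \<in> CG \<and> dist G G0 \<le> r k) G1 \<and>
        is_arg_min (\<lambda>H. L (W1, H, b1, G1)) (\<lambda>H. H \<in> CH \<and> dist H H0 \<le> r k) H1)"
        using iter unfolding bcd_dr_def by (rule conjunct2)
      from all[rule_format, OF k] show ?thesis by (simp only: e0 e1 prod.case)
    qed
    have p0: "W0 \<in> CW" "H0 \<in> CH" "b0 \<in> Cb" "G0 \<in> CG" using prev e0 by auto
    have rk: "r k > 0" using r_pos k by auto
    note st = bcd_step[OF K(2) K(6) cv less_imp_le[OF K(1)] rk p0 it[THEN conjunct1]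
        it[THEN conjunct2, THEN conjunct1] it[THEN conjunct2, THEN conjunct2, THEN conjunct1]
        it[THEN conjunct2, THEN conjunct2, THEN conjunct2]]
    show ?thesis unfolding e0 e1
    proof (intro conjI ballI)
      show "(W1, H1, b1, G1) \<in> ?T" by (rule st(1))
      show "L (W1, H1, b1, G1) \<le> L (W0, H0, b0, G0)" by (rule st(2))
      show "norm ((W1, H1, b1, G1) - (W0, H0, b0, G0)) \<le> 4 * r k" by (rule st(3))
      fix Z' assume "Z' \<in> ?T"
      then show "- D (W1, H1, b1, G1) (Z' - (W1, H1, b1, G1)) \<le> norm (Z' - (W1, H1, b1, G1)) *
        ((L (W0, H0, b0, G0) - L (W1, H1, b1, G1)) / r k + 16 * K * r k)" using st(4) by blast
    qed
  qed
  have inT: "Z k \<in> ?T" for k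
  proof (induction k)
    case 0 then show ?case by (rule Z0)
  next
    case (Suc k)
    have p: "Z (Suc k - 1) \<in> ?T" using Suc by simp
    have "1 \<le> Suc k" by simp
    from step[OF this p] show ?case by (rule conjunct1)
  qed
  show ?thesis
  proof (rule that[of K])
    show "K > 0" by (rule K(1))
    show "Z k \<in> ?T" for k by (rule inT)
    show "L (Z k) \<le> L (Z (k - 1))" if "k \<ge> 1" for k using step[OF that inT] by blast
    show "norm (Z k - Z (k - 1)) \<le> 4 * r k" if "k \<ge> 1" for k using step[OF that inT] by blast
    show "\<bar>L x\<bar> \<le> K" if "x \<in> ?T" for x using K(3)[OF that] by simp
    show "norm (grad L x - grad L y) \<le> K * norm (x - y)" if "x \<in> ?T" "y \<in> ?T" for x y
      by (rule grad_lip[OF K(2) K(6) that less_imp_le[OF K(1)]])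
    fix k :: nat assume k: "k \<ge> 1"
    have rk: "r k > 0" using r_pos k by auto
    have st: "L (Z k) \<le> L (Z (k - 1))"
      "\<forall>Z'\<in>?T. - D (Z k) (Z' - Z k) \<le> norm (Z' - Z k) * ((L (Z (k - 1)) - L (Z k)) / r k + 16 * K * r k)"
      using step[OF k inT] by blast+
    have c0: "(L (Z (k - 1)) - L (Z k)) / r k + 16 * K * r k \<ge> 0" using st(1) rk K(1) by simp
    have "stat_measure L ?T (Z k) \<le> (L (Z (k - 1)) - L (Z k)) / r k + 16 * K * r k"
    proof (rule stat_measure_le[OF inT c0])
      fix Z' assume Z': "Z' \<in> ?T"
      have "D (Z k) (Z' - Z k) = inner (grad L (Z k)) (Z' - Z k)"
        using grad_eq[where L=L and D=D and x="Z k", OF K(2)[OF inT]] by simp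
      thus "- inner (grad L (Z k)) (Z' - Z k) \<le> norm (Z' - Z k) * ((L (Z (k - 1)) - L (Z k)) / r k + 16 * K * r k)"
        using bspec[OF st(2) Z'] by linarith
    qed
    hence "r k * stat_measure L ?T (Z k) \<le> r k * ((L (Z (k - 1)) - L (Z k)) / r k + 16 * K * r k)"
      using rk by (simp add: mult_left_mono)
    also have "\<dots> = L (Z (k - 1)) - L (Z k) + 16 * K * (r k)\<^sup>2" using rk by (simp add: field_simps power2_eq_square)
    finally show "r k * stat_measure L ?T (Z k) \<le> L (Z (k - 1)) - L (Z k) + 16 * K * (r k)\<^sup>2" .
  qed
qed


lemma sum_shift1: "(\<Sum>k=1..T. g k) = (\<Sum>k<T. g (Suc k)) " for g :: "nat \<Rightarrow> real"
  by (induction T) (auto simp: sum.cl_ivl_Suc)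

lemma partial_bound:
  fixes m r :: "nat \<Rightarrow> real" and F :: "nat \<Rightarrow> real"
  assumes step: "\<And>k. k \<ge> 1 \<Longrightarrow> r k * m k \<le> F (k - 1) - F k + 16 * K * (r k)\<^sup>2"
    and FK: "\<And>k. \<bar>F k\<bar> \<le> K" and K: "K > 0"
    and mnn: "\<And>k. 0 \<le> m k" and rpos: "\<forall>t\<ge>1. r t > 0"
    and rsq: "summable (\<lambda>t. (r t)\<^sup>2)"
  defines "f \<equiv> \<lambda>k. if k = 0 then 0 else r k * m k"
  shows "\<And>n. (\<Sum>k<n. f k) \<le> 2 * K + 16 * K * suminf (\<lambda>t. (r t)\<^sup>2)"
    and "summable f" and "\<And>k. f k \<ge> 0"
proof -
  show fnn: "f k \<ge> 0" for k
  proof (cases "k = 0")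
    case True then show ?thesis unfolding f_def by simp
  next
    case False
    then have "r k > 0" using rpos by simp
    thus ?thesis unfolding f_def using mnn[of k] False by simp
  qed
  have P: "(\<Sum>k<Suc n. f k) \<le> F 0 - F n + 16 * K * (\<Sum>k<Suc n. (r k)\<^sup>2)" for n
  proof (induction n)
    case 0 then show ?case using K by (simp add: f_def)
  next
    case (Suc n)
    have "f (Suc n) \<le> F n - F (Suc n) + 16 * K * (r (Suc n))\<^sup>2" using step[of "Suc n"] by (simp add: f_def)
    then show ?case using Suc by (simp add: distrib_left)
  qed
  have rs: "(\<Sum>k<Suc n. (r k)\<^sup>2) \<le> suminf (\<lambda>t. (r t)\<^sup>2)" for n
    by (rule sum_le_suminf[OF rsq]) auto
  show bound: "(\<Sum>k<n. f k) \<le> 2 * K + 16 * K * suminf (\<lambda>t. (r t)\<^sup>2)" for n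
  proof -
    have "(\<Sum>k<n. f k) \<le> (\<Sum>k<Suc n. f k)" using fnn by simp
    also have "\<dots> \<le> F 0 - F n + 16 * K * (\<Sum>k<Suc n. (r k)\<^sup>2)" by (rule P)
    also have "\<dots> \<le> 2 * K + 16 * K * suminf (\<lambda>t. (r t)\<^sup>2)"
    proof -
      have "16 * K * (\<Sum>k<Suc n. (r k)\<^sup>2) \<le> 16 * K * suminf (\<lambda>t. (r t)\<^sup>2)"
        using rs[of n] K by (intro mult_left_mono) auto
      thus ?thesis using FK[of 0] FK[of n] by (simp add: abs_le_iff)
    qed
    finally show ?thesis .
  qed
  show "summable f" by (rule summableI_nonneg_bounded[OF fnn bound])
qed

lemma min_bound:
  fixes m r :: "nat \<Rightarrow> real"
  assumes bound: "\<And>n. (\<Sum>k<n. (if k = 0 then 0 else r k * m k)) \<le> C"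
    and mnn: "\<And>k. 0 \<le> m k" and rpos: "\<forall>t\<ge>1. r t > 0" and T: "T \<ge> 1"
  shows "Min (m ` {1..T}) * (\<Sum>k=1..T. r k) \<le> C" and "(\<Sum>k=1..T. r k) > 0"
    and "\<exists>k\<in>{1..T}. m k * (\<Sum>k=1..T. r k) \<le> C"
proof -
  have fin: "finite (m ` {1..T})" "m ` {1..T} \<noteq> {}" using T by auto
  have "Min (m ` {1..T}) * (\<Sum>k=1..T. r k) = (\<Sum>k=1..T. r k * Min (m ` {1..T}))"
    by (simp only: mult.commute[of "Min _"] sum_distrib_right)
  also have "\<dots> \<le> (\<Sum>k=1..T. r k * m k)"
    using rpos by (intro sum_mono mult_left_mono) (auto intro: Min_le)
  also have "\<dots> = (\<Sum>k<Suc T. (if k = 0 then 0 else r k * m k))"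
  proof -
    have "(\<Sum>k<Suc T. (if k = 0 then 0 else r k * m k)) = (\<Sum>k<T. r (Suc k) * m (Suc k))"
      by (subst sum.lessThan_Suc_shift) simp
    thus ?thesis using sum_shift1[of "\<lambda>k. r k * m k" T] by linarith
  qed
  also have "\<dots> \<le> C" by (rule bound)
  finally show A: "Min (m ` {1..T}) * (\<Sum>k=1..T. r k) \<le> C" .
  show "(\<Sum>k=1..T. r k) > 0" using rpos T by (intro sum_pos) auto
  have "Min (m ` {1..T}) \<in> m ` {1..T}" using fin by (rule Min_in)
  then obtain k where k: "k \<in> {1..T}" "m k = Min (m ` {1..T})" by auto
  have "m k * (\<Sum>k=1..T. r k) \<le> C" using A k(2) by simp
  thus "\<exists>k\<in>{1..T}. m k * (\<Sum>k=1..T. r k) \<le> C" using k(1) by blast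
qed


lemma near_nonstat:
  fixes L :: "'a::real_inner \<Rightarrow> real"
  assumes l: "l \<in> \<Theta>" and ns: "\<not> stationary_on L \<Theta> l"
    and glip: "\<And>x y. x \<in> \<Theta> \<Longrightarrow> y \<in> \<Theta> \<Longrightarrow> norm (grad L x - grad L y) \<le> K * norm (x - y)"
    and K: "K > 0"
  obtains \<delta> c where "\<delta> > 0" "c > 0" "\<And>Z. Z \<in> \<Theta> \<Longrightarrow> norm (Z - l) < \<delta> \<Longrightarrow> stat_measure L \<Theta> Z \<ge> c"
proof -
  obtain Z' where Z': "Z' \<in> \<Theta>" "inner (grad L l) (Z' - l) < 0"
    using ns l unfolding stationary_on_def by (auto simp: not_le)
  define d where "d = Z' - l"
  define n where "n = norm d"
  define a where "a = - inner (grad L l) d"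
  define Gl where "Gl = norm (grad L l)"
  have a: "a > 0" using Z' unfolding a_def d_def by simp
  have "d \<noteq> 0" using Z' unfolding d_def by auto
  hence n: "n > 0" unfolding n_def by simp
  define M where "M = K * (3 * n / 2) + Gl + 1"
  have M: "M > 0" unfolding M_def Gl_def using K n by (simp add: add_pos_nonneg)
  define \<delta> where "\<delta> = min (n / 2) (a / (2 * M))"
  define c where "c = a / (3 * n)"
  have \<delta>: "\<delta> > 0" unfolding \<delta>_def using n a M by simp
  have c: "c > 0" unfolding c_def using a n by simp
  show ?thesis
  proof (rule that[OF \<delta> c])
    fix Z assume Z: "Z \<in> \<Theta>" and s: "norm (Z - l) < \<delta>"
    define s' where "s' = norm (Z - l)"
    have s1: "s' \<le> n / 2" "s' \<le> a / (2 * M)" "s' \<ge> 0" using s unfolding s'_def \<delta>_def by auto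
    define dZ where "dZ = Z' - Z"
    have dZd: "dZ = d - (Z - l)" unfolding dZ_def d_def by simp
    have ndZ1: "norm dZ \<le> n + s'" unfolding dZd n_def s'_def by (rule norm_triangle_ineq4)
    have ndZ2: "norm dZ \<ge> n - s'" unfolding dZd n_def s'_def by (metis norm_triangle_ineq2)
    have ndZ1': "norm dZ \<le> 3 * n / 2" using ndZ1 s1 by simp
    have ndZpos: "norm dZ > 0" using ndZ2 s1 n by linarith
    have dec: "inner (grad L Z) dZ = inner (grad L l) d + inner (grad L Z - grad L l) dZ + inner (grad L l) (dZ - d)"
      by (simp add: inner_diff_left inner_diff_right)
    have t1: "\<bar>inner (grad L Z - grad L l) dZ\<bar> \<le> K * s' * (3 * n / 2)"
    proof -
      have "\<bar>inner (grad L Z - grad L l) dZ\<bar> \<le> norm (grad L Z - grad L l) * norm dZ" by (rule Cauchy_Schwarz_ineq2)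
      also have "\<dots> \<le> (K * s') * (3 * n / 2)" using glip[OF Z l] ndZ1' K unfolding s'_def
        by (intro mult_mono) auto
      finally show ?thesis by simp
    qed
    have t2: "\<bar>inner (grad L l) (dZ - d)\<bar> \<le> Gl * s'"
    proof -
      have "\<bar>inner (grad L l) (dZ - d)\<bar> \<le> norm (grad L l) * norm (dZ - d)" by (rule Cauchy_Schwarz_ineq2)
      also have "norm (dZ - d) = s'" unfolding dZd s'_def by (simp add: norm_minus_commute)
      finally show ?thesis unfolding Gl_def by simp
    qed
    have "s' * M \<le> a / 2" using s1(2) M by (simp add: field_simps)
    moreover have "s' * M = K * s' * (3 * n / 2) + Gl * s' + s'" unfolding M_def by (simp add: algebra_simps)
    ultimately have "- inner (grad L Z) dZ \<ge> a / 2" using dec t1 t2 s1(3) unfolding a_def by (simp add: abs_le_iff) linarith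
    hence num: "- inner (grad L Z) dZ \<ge> a / 2" .
    have v: "inner (grad L Z) ((1 / norm dZ) *\<^sub>R dZ) = inner (grad L Z) dZ / norm dZ" by simp
    have "c = (a / 2) / (3 * n / 2)" unfolding c_def by simp
    also have "\<dots> \<le> (- inner (grad L Z) dZ) / (3 * n / 2)" using num n by (intro divide_right_mono) auto
    also have "\<dots> \<le> (- inner (grad L Z) dZ) / norm dZ"
    proof (rule divide_left_mono)
      show "norm dZ \<le> 3 * n / 2" by (rule ndZ1')
      show "0 \<le> - inner (grad L Z) dZ" using num a by linarith
      show "0 < 3 * n / 2 * norm dZ" using n ndZpos by simp
    qed
    finally have cv: "c \<le> - inner (grad L Z) ((1 / norm (Z' - Z)) *\<^sub>R (Z' - Z))" using v unfolding dZ_def by simp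
    have "(INF Z''\<in>\<Theta>. inner (grad L Z) ((1 / norm (Z'' - Z)) *\<^sub>R (Z'' - Z))) \<le> inner (grad L Z) ((1 / norm (Z' - Z)) *\<^sub>R (Z' - Z))"
      by (rule cINF_lower[OF bdd_belowI2[where m="- norm (grad L Z)"] Z'(1)]) (rule stat_bdd)
    thus "stat_measure L \<Theta> Z \<ge> c" using cv unfolding stat_measure_def by linarith
  qed
qed

lemma telescope_norm:
  fixes Z :: "nat \<Rightarrow> 'a::real_normed_vector"
  assumes "a \<le> b"
  shows "norm (Z b - Z a) \<le> (\<Sum>k\<in>{Suc a..b}. norm (Z k - Z (k - 1)))"
  using assms
proof (induction b)
  case 0 then show ?case by simp
next
  case (Suc b)
  show ?case
  proof (cases "a = Suc b")
    case True then show ?thesis by simp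
  next
    case False
    hence ab: "a \<le> b" using Suc by simp
    have "norm (Z (Suc b) - Z a) \<le> norm (Z (Suc b) - Z b) + norm (Z b - Z a)"
      by (metis diff_add_cancel add_diff_eq norm_triangle_ineq)
    also have "\<dots> \<le> norm (Z (Suc b) - Z b) + (\<Sum>k\<in>{Suc a..b}. norm (Z k - Z (k - 1)))" using Suc.IH[OF ab] by simp
    also have "\<dots> = (\<Sum>k\<in>{Suc a..Suc b}. norm (Z k - Z (k - 1)))" using ab by (simp add: sum.cl_ivl_Suc)
    finally show ?thesis .
  qed
qed


lemma excursion:
  fixes Z :: "nat \<Rightarrow> 'a::real_normed_vector" and r m :: "nat \<Rightarrow> real"
  assumes summ: "summable (\<lambda>k. if k = 0 then 0 else r k * m k)"
    and mv: "\<And>k. k \<ge> 1 \<Longrightarrow> norm (Z k - Z (k - 1)) \<le> 4 * r k"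
    and rpos: "\<forall>t\<ge>1. r t > 0" and r0: "r \<longlonglongrightarrow> 0"
    and rdiv: "filterlim (\<lambda>T. \<Sum>t=1..T. r t) at_top sequentially"
    and \<delta>: "\<delta> > 0" and c: "c > 0"
    and near: "\<And>k. norm (Z k - l) < \<delta> \<Longrightarrow> m k \<ge> c"
    and freq: "\<And>N. \<exists>a\<ge>N. norm (Z a - l) < \<delta> / 2"
  shows False
proof -
  define f where "f k = (if k = 0 then 0 else r k * m k)" for k
  have summ': "summable f" using summ unfolding f_def .
  obtain N0 where N0: "\<And>p q. p \<ge> N0 \<Longrightarrow> norm (sum f {p..<q}) < c * \<delta> / 16"
    using summ' unfolding summable_Cauchy using c \<delta> by (metis divide_pos_pos mult_pos_pos zero_less_numeral)
  obtain N1 where N1: "\<And>k. k \<ge> N1 \<Longrightarrow> r k < \<delta> / 16"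
  proof -
    have d16: "\<delta> / 16 > 0" using \<delta> by simp
    from r0 have "\<exists>no. \<forall>n\<ge>no. dist (r n) 0 < \<delta> / 16" unfolding lim_sequentially using d16 by blast
    then obtain no where "\<forall>n\<ge>no. dist (r n) 0 < \<delta> / 16" by blast
    hence "\<And>k. k \<ge> no \<Longrightarrow> r k < \<delta> / 16" by (auto simp: dist_real_def abs_less_iff)
    thus ?thesis by (rule that)
  qed
  obtain a where a: "a \<ge> N0 + N1 + 1" "norm (Z a - l) < \<delta> / 2" using freq by blast
  have a1: "a \<ge> 1" "a \<ge> N0" "a \<ge> N1" using a by auto
  \<comment> \<open>on a run staying near l, the r-sum is small\<close>
  have small: "(\<Sum>k\<in>{Suc a..<q}. r k) < \<delta> / 16" if run: "\<And>k. a \<le> k \<Longrightarrow> k < q \<Longrightarrow> norm (Z k - l) < \<delta>" for q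
  proof -
    have "c * (\<Sum>k\<in>{Suc a..<q}. r k) = (\<Sum>k\<in>{Suc a..<q}. r k * c)" by (simp add: sum_distrib_left mult.commute)
    also have "\<dots> \<le> (\<Sum>k\<in>{Suc a..<q}. f k)"
    proof (rule sum_mono)
      fix k assume k: "k \<in> {Suc a..<q}"
      hence "m k \<ge> c" using near run by auto
      moreover have "r k > 0" using rpos k by auto
      ultimately show "r k * c \<le> f k" unfolding f_def using k by (simp add: mult_left_mono)
    qed
    also have "\<dots> \<le> norm (sum f {Suc a..<q})" by simp
    also have "\<dots> < c * \<delta> / 16" using N0 a1 by simp
    finally show ?thesis using c by (simp add: mult.commute)
  qed
  show False
  proof (cases "\<forall>k\<ge>a. norm (Z k - l) < \<delta>")
    case True
    have "eventually (\<lambda>n. (\<Sum>t=1..a. r t) + \<delta> / 16 < (\<Sum>t=1..n. r t)) sequentially"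
      using rdiv unfolding filterlim_at_top_dense by blast
    then obtain M where M: "\<And>n. n \<ge> M \<Longrightarrow> (\<Sum>t=1..n. r t) > (\<Sum>t=1..a. r t) + \<delta> / 16"
      unfolding eventually_sequentially by blast
    define n where "n = max M a"
    have "(\<Sum>t=1..n. r t) = (\<Sum>t=1..a. r t) + (\<Sum>t\<in>{Suc a..<Suc n}. r t)"
    proof -
      have "{1..n} = {1..a} \<union> {Suc a..<Suc n}" unfolding n_def using a1 by auto
      moreover have "{1..a} \<inter> {Suc a..<Suc n} = {}" by auto
      ultimately show ?thesis by (simp add: sum.union_disjoint)
    qed
    moreover have "(\<Sum>t\<in>{Suc a..<Suc n}. r t) < \<delta> / 16" by (rule small) (use True in auto)
    moreover have "(\<Sum>t=1..n. r t) > (\<Sum>t=1..a. r t) + \<delta> / 16" using M unfolding n_def by simp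
    ultimately show False by linarith
  next
    case False
    define b where "b = (LEAST k. k \<ge> a \<and> \<not> norm (Z k - l) < \<delta>)"
    have bex: "\<exists>k. k \<ge> a \<and> \<not> norm (Z k - l) < \<delta>" using False by auto
    have b1: "b \<ge> a" "\<not> norm (Z b - l) < \<delta>" using LeastI_ex[OF bex] unfolding b_def by auto
    have b2: "norm (Z k - l) < \<delta>" if "a \<le> k" "k < b" for k
      using not_less_Least[of k "\<lambda>k. k \<ge> a \<and> \<not> norm (Z k - l) < \<delta>"] that unfolding b_def by auto
    have ab: "a < b"
    proof (rule ccontr)
      assume "\<not> a < b"
      hence "b = a" using b1(1) by simp
      thus False using b1(2) a(2) \<delta> by simp
    qed
    have "norm (Z b - Z a) \<ge> \<delta> / 2"
    proof -
      have "norm (Z b - l) \<le> norm (Z b - Z a) + norm (Z a - l)" by (metis diff_add_cancel add_diff_eq norm_triangle_ineq)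
      thus ?thesis using b1(2) a(2) by linarith
    qed
    also have "norm (Z b - Z a) \<le> (\<Sum>k\<in>{Suc a..b}. norm (Z k - Z (k - 1)))" by (rule telescope_norm) (use ab in simp)
    also have "\<dots> \<le> (\<Sum>k\<in>{Suc a..b}. 4 * r k)" by (rule sum_mono) (use mv in auto)
    also have "\<dots> = 4 * ((\<Sum>k\<in>{Suc a..<b}. r k) + r b)"
    proof -
      have "{Suc a..b} = insert b {Suc a..<b}" using ab by auto
      thus ?thesis by (simp add: sum_distrib_left[symmetric] distrib_left)
    qed
    finally have "(\<Sum>k\<in>{Suc a..<b}. r k) \<ge> \<delta> / 8 - r b" by simp
    moreover have "r b < \<delta> / 16" using N1 a1 ab by simp
    moreover have "(\<Sum>k\<in>{Suc a..<b}. r k) < \<delta> / 16" by (rule small) (use b2 in auto)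
    ultimately show False by linarith
  qed
qed


lemma part_i:
  fixes Z :: "nat \<Rightarrow> 'a::real_inner" and L :: "'a \<Rightarrow> real" and r :: "nat \<Rightarrow> real"
  assumes \<Theta>c: "compact \<Theta>" and inT: "\<And>k. Z k \<in> \<Theta>"
    and mv: "\<And>k. k \<ge> 1 \<Longrightarrow> norm (Z k - Z (k - 1)) \<le> 4 * r k"
    and glip: "\<And>x y. x \<in> \<Theta> \<Longrightarrow> y \<in> \<Theta> \<Longrightarrow> norm (grad L x - grad L y) \<le> K * norm (x - y)"
    and K: "K > 0"
    and summ: "summable (\<lambda>k. if k = 0 then 0 else r k * stat_measure L \<Theta> (Z k))"
    and rpos: "\<forall>t\<ge>1. r t > 0" and r0: "r \<longlonglongrightarrow> 0"
    and rdiv: "filterlim (\<lambda>T. \<Sum>t=1..T. r t) at_top sequentially"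
  shows "(\<lambda>t. infdist (Z t) {Z'. stationary_on L \<Theta> Z'}) \<longlonglongrightarrow> 0"
proof (rule ccontr)
  let ?S = "{Z'. stationary_on L \<Theta> Z'}"
  assume nc: "\<not> (\<lambda>t. infdist (Z t) ?S) \<longlonglongrightarrow> 0"
  obtain \<epsilon> where \<epsilon>: "\<epsilon> > 0" "\<And>no. \<exists>n\<ge>no. infdist (Z n) ?S \<ge> \<epsilon>"
  proof -
    from nc obtain \<epsilon> where "\<epsilon> > 0" "\<not> (\<exists>no. \<forall>n\<ge>no. dist (infdist (Z n) ?S) 0 < \<epsilon>)"
      unfolding lim_sequentially by blast
    hence "\<And>no. \<exists>n\<ge>no. infdist (Z n) ?S \<ge> \<epsilon>" by (auto simp: dist_real_def infdist_nonneg not_less)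
    thus ?thesis using \<open>\<epsilon> > 0\<close> that by blast
  qed
  have "infinite {n. infdist (Z n) ?S \<ge> \<epsilon>}"
    unfolding infinite_nat_iff_unbounded_le using \<epsilon>(2) by blast
  then obtain \<sigma> :: "nat \<Rightarrow> nat" where \<sigma>: "strict_mono \<sigma>" "\<And>n. infdist (Z (\<sigma> n)) ?S \<ge> \<epsilon>"
    using infinite_enumerate by blast
  have "seq_compact \<Theta>" by (rule compact_imp_seq_compact[OF \<Theta>c])
  then obtain l \<rho> where l: "l \<in> \<Theta>" "strict_mono (\<rho> :: nat \<Rightarrow> nat)" "((Z \<circ> \<sigma>) \<circ> \<rho>) \<longlonglongrightarrow> l"
    using seq_compactE[of \<Theta> "Z \<circ> \<sigma>"] inT by auto
  have "(\<lambda>n. infdist (((Z \<circ> \<sigma>) \<circ> \<rho>) n) ?S) \<longlonglongrightarrow> infdist l ?S"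
    by (rule tendsto_infdist[OF l(3)])
  hence "\<epsilon> \<le> infdist l ?S" by (rule LIMSEQ_le_const) (use \<sigma>(2) in auto)
  hence "l \<notin> ?S" using \<epsilon>(1) by auto
  hence ns: "\<not> stationary_on L \<Theta> l" by simp
  obtain \<delta> c where \<delta>: "\<delta> > 0" "c > 0" "\<And>Z. Z \<in> \<Theta> \<Longrightarrow> norm (Z - l) < \<delta> \<Longrightarrow> stat_measure L \<Theta> Z \<ge> c"
    using near_nonstat[OF l(1) ns glip K] by blast
  show False
  proof (rule excursion[OF summ mv rpos r0 rdiv \<delta>(1) \<delta>(2)])
    show "\<And>k. norm (Z k - l) < \<delta> \<Longrightarrow> c \<le> stat_measure L \<Theta> (Z k)" using \<delta>(3) inT by blast
    fix N
    have d2: "\<delta> / 2 > 0" using \<delta> by simp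
    obtain n0 where n0: "\<And>n. n \<ge> n0 \<Longrightarrow> dist (((Z \<circ> \<sigma>) \<circ> \<rho>) n) l < \<delta> / 2"
      using l(3) d2 unfolding lim_sequentially by blast
    define n where "n = max n0 N"
    have "\<sigma> (\<rho> n) \<ge> n"
      using seq_suble[OF l(2), of n] seq_suble[OF \<sigma>(1), of "\<rho> n"] by simp
    hence "\<sigma> (\<rho> n) \<ge> N" unfolding n_def by simp
    moreover have "norm (Z (\<sigma> (\<rho> n)) - l) < \<delta> / 2" using n0[of n] unfolding n_def by (simp add: dist_norm)
    ultimately show "\<exists>a\<ge>N. norm (Z a - l) < \<delta> / 2" by blast
  qed
qed


lemma S_lower:
  fixes r :: "nat \<Rightarrow> real"
  assumes rpos: "\<forall>t\<ge>1. r t > 0" and rform: "\<forall>k\<ge>2. r k = 1 / (sqrt (real k) * ln (real k))"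
    and T: "T \<ge> 2"
  shows "(\<Sum>k=1..T. r k) \<ge> sqrt (real T) / (2 * ln (real T))"
proof -
  have lnT: "ln (real T) > 0" using T by simp
  have sT: "sqrt (real T) > 0" using T by simp
  have each: "r k \<ge> 1 / (sqrt (real T) * ln (real T))" if k: "k \<in> {2..T}" for k
  proof -
    have k2: "real k \<ge> 2" "real k \<le> real T" using k by auto
    have "sqrt (real k) * ln (real k) \<le> sqrt (real T) * ln (real T)"
      using k2 by (intro mult_mono) auto
    moreover have "sqrt (real k) * ln (real k) > 0" using k2 by simp
    ultimately show ?thesis using rform k by (simp add: frac_le)
  qed
  have "(\<Sum>k=1..T. r k) \<ge> (\<Sum>k=2..T. r k)"
  proof -
    have "{1..T} = insert 1 {2..T}" using T by auto
    hence "(\<Sum>k=1..T. r k) = r 1 + (\<Sum>k=2..T. r k)" by simp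
    moreover have "r 1 > 0" using rpos by simp
    ultimately show ?thesis by simp
  qed
  moreover have "(\<Sum>k=2..T. r k) \<ge> (\<Sum>k=2..T. 1 / (sqrt (real T) * ln (real T)))"
    by (rule sum_mono) (rule each)
  moreover have "(\<Sum>k=2..T. 1 / (sqrt (real T) * ln (real T))) = (real T - 1) / (sqrt (real T) * ln (real T))"
    using T by (simp add: of_nat_diff)
  moreover have "(real T - 1) / (sqrt (real T) * ln (real T)) \<ge> (real T / 2) / (sqrt (real T) * ln (real T))"
    using T lnT sT by (intro divide_right_mono) auto
  moreover have "(real T / 2) / (sqrt (real T) * ln (real T)) = sqrt (real T) / (2 * ln (real T))"
  proof -
    have "real T = sqrt (real T) * sqrt (real T)" by simp
    then show ?thesis using sT lnT by (simp add: field_simps)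
  qed
  ultimately show ?thesis by linarith
qed

lemma part_iii:
  fixes m r :: "nat \<Rightarrow> real"
  assumes rpos: "\<forall>t\<ge>1. r t > 0"
    and ex: "\<And>T. T \<ge> 1 \<Longrightarrow> \<exists>k\<in>{1..T}. m k * (\<Sum>k=1..T. r k) \<le> C"
    and rdiv: "filterlim (\<lambda>T. \<Sum>t=1..T. r t) at_top sequentially"
    and rform: "\<forall>k\<ge>2. r k = 1 / (sqrt (real k) * ln (real k))"
  shows "\<exists>N :: real \<Rightarrow> nat. (\<lambda>\<epsilon>. real (N \<epsilon>)) \<in> O[at_right 0](\<lambda>\<epsilon>. (1 / \<epsilon>) * (ln (1 / \<epsilon>))\<^sup>2) \<and>
           (\<forall>\<epsilon>>0. \<exists>k\<in>{1..N \<epsilon>}. m k \<le> sqrt \<epsilon>)"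
proof -
  define C' where "C' = max C 1"
  have C': "C' > 0" "C \<le> C'" unfolding C'_def by auto
  define S where "S T = (\<Sum>t=1..T. r t)" for T
  have Spos: "S T > 0" if "T \<ge> 1" for T unfolding S_def using rpos that by (intro sum_pos) auto
  define P where "P \<epsilon> T \<longleftrightarrow> T \<ge> 1 \<and> C' \<le> sqrt \<epsilon> * S T" for \<epsilon> T
  define N where "N \<epsilon> = (LEAST T. P \<epsilon> T)" for \<epsilon>
  have Pex: "\<exists>T. P \<epsilon> T" if e: "\<epsilon> > 0" for \<epsilon>
  proof -
    have "eventually (\<lambda>T. C' / sqrt \<epsilon> < S T) sequentially"
      using rdiv unfolding filterlim_at_top_dense S_def by blast
    then obtain T0 where T0: "\<And>T. T \<ge> T0 \<Longrightarrow> C' / sqrt \<epsilon> < S T" unfolding eventually_sequentially by blast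
    define T where "T = max T0 1"
    have "C' / sqrt \<epsilon> < S T" using T0 unfolding T_def by simp
    hence "C' \<le> sqrt \<epsilon> * S T" using e by (simp add: divide_less_eq mult.commute)
    moreover have "T \<ge> 1" unfolding T_def by simp
    ultimately show ?thesis unfolding P_def by blast
  qed
  have NP: "P \<epsilon> (N \<epsilon>)" if "\<epsilon> > 0" for \<epsilon> unfolding N_def using Pex[OF that] by (rule LeastI_ex)
  have good: "\<exists>k\<in>{1..N \<epsilon>}. m k \<le> sqrt \<epsilon>" if e: "\<epsilon> > 0" for \<epsilon>
  proof -
    have P: "N \<epsilon> \<ge> 1" "C' \<le> sqrt \<epsilon> * S (N \<epsilon>)" using NP[OF e] unfolding P_def by auto
    obtain k where k: "k \<in> {1..N \<epsilon>}" "m k * S (N \<epsilon>) \<le> C" using ex[OF P(1)] unfolding S_def by blast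
    have "m k * S (N \<epsilon>) \<le> sqrt \<epsilon> * S (N \<epsilon>)" using k(2) P(2) C' by linarith
    hence "m k \<le> sqrt \<epsilon>" using Spos[OF P(1)] by simp
    thus ?thesis using k(1) by blast
  qed
  define A where "A = (4 * C' + 1)\<^sup>2"
  have A: "A > 0" "sqrt A = 4 * C' + 1" unfolding A_def using C' by auto
  define T1 where "T1 \<epsilon> = A / \<epsilon> * (ln (1 / \<epsilon>))\<^sup>2" for \<epsilon> :: real
  have ev: "eventually (\<lambda>\<epsilon>. 0 < \<epsilon> \<and> \<epsilon> < 1 \<and> T1 \<epsilon> \<ge> 2 \<and>
      ln 2 + ln A + 2 * ln (ln (1 / \<epsilon>)) \<le> ln (1 / \<epsilon>)) (at_right (0::real))"
  proof -
    have e1: "eventually (\<lambda>\<epsilon>::real. 0 < \<epsilon>) (at_right 0)" by real_asymp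
    have e2: "eventually (\<lambda>\<epsilon>::real. \<epsilon> < 1) (at_right 0)" by real_asymp
    have e3: "eventually (\<lambda>\<epsilon>. T1 \<epsilon> \<ge> 2) (at_right 0)" unfolding T1_def using A(1) by real_asymp
    have e4: "eventually (\<lambda>\<epsilon>::real. ln 2 + ln A + 2 * ln (ln (1 / \<epsilon>)) \<le> ln (1 / \<epsilon>)) (at_right 0)" by real_asymp
    show ?thesis using e1 e2 e3 e4 by eventually_elim auto
  qed
  have bnd: "real (N \<epsilon>) \<le> 2 * A * norm ((1 / \<epsilon>) * (ln (1 / \<epsilon>))\<^sup>2)"
    if h: "0 < \<epsilon> \<and> \<epsilon> < 1 \<and> T1 \<epsilon> \<ge> 2 \<and> ln 2 + ln A + 2 * ln (ln (1 / \<epsilon>)) \<le> ln (1 / \<epsilon>)" for \<epsilon>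
  proof -
    have e: "\<epsilon> > 0" "\<epsilon> < 1" "T1 \<epsilon> \<ge> 2" and lnc: "ln 2 + ln A + 2 * ln (ln (1 / \<epsilon>)) \<le> ln (1 / \<epsilon>)" using h by auto
    define L where "L = ln (1 / \<epsilon>)"
    have L: "L > 0" unfolding L_def using e by simp
    define T where "T = nat \<lceil>T1 \<epsilon>\<rceil>"
    have T: "real T \<ge> T1 \<epsilon>" "real T \<le> T1 \<epsilon> + 1" "T \<ge> 2" unfolding T_def using e(3) by linarith+
    have T2: "real T \<le> 2 * T1 \<epsilon>" using T e(3) by linarith
    have T1L: "T1 \<epsilon> = A / \<epsilon> * L\<^sup>2" unfolding T1_def L_def by simp
    have "ln (real T) \<le> ln (2 * T1 \<epsilon>)" using T2 T by simp
    also have "ln (2 * T1 \<epsilon>) = ln 2 + ln A + L + 2 * ln L"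
    proof -
      have "2 * T1 \<epsilon> = 2 * A * (1 / \<epsilon>) * L\<^sup>2" unfolding T1L by simp
      moreover have "ln (2 * A * (1 / \<epsilon>) * L\<^sup>2) = ln 2 + ln A + ln (1 / \<epsilon>) + ln (L\<^sup>2)"
      proof -
        have "ln (2 * A * (1 / \<epsilon>) * L\<^sup>2) = ln (2 * A * (1 / \<epsilon>)) + ln (L\<^sup>2)"
          by (rule ln_mult_pos) (use A e L in auto)
        also have "ln (2 * A * (1 / \<epsilon>)) = ln (2 * A) + ln (1 / \<epsilon>)"
          by (rule ln_mult_pos) (use A e in auto)
        also have "ln (2 * A) = ln 2 + ln A" by (rule ln_mult_pos) (use A in auto)
        finally show ?thesis .
      qed
      moreover have "ln (L\<^sup>2) = 2 * ln L" using L by (simp add: ln_realpow)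
      ultimately show ?thesis unfolding L_def by simp
    qed
    also have "\<dots> \<le> 2 * L" using lnc unfolding L_def by simp
    finally have lnT: "ln (real T) \<le> 2 * L" .
    have lnTpos: "ln (real T) > 0" using T by simp
    have "sqrt (\<epsilon> * real T) \<ge> sqrt (\<epsilon> * T1 \<epsilon>)" using T e by (simp add: mult_left_mono)
    also have "sqrt (\<epsilon> * T1 \<epsilon>) = sqrt A * L"
    proof -
      have "\<epsilon> * T1 \<epsilon> = A * L\<^sup>2" unfolding T1L using e by simp
      thus ?thesis using L A by (simp add: real_sqrt_mult)
    qed
    finally have sq: "sqrt (\<epsilon> * real T) \<ge> (4 * C' + 1) * L" using A by simp
    have "2 * C' * ln (real T) \<le> 2 * C' * (2 * L)" using lnT C' by simp
    also have "\<dots> \<le> (4 * C' + 1) * L" using L by simp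
    also have "\<dots> \<le> sqrt (\<epsilon> * real T)" by (rule sq)
    finally have key: "2 * C' * ln (real T) \<le> sqrt \<epsilon> * sqrt (real T)" by (simp add: real_sqrt_mult)
    have SL: "S T \<ge> sqrt (real T) / (2 * ln (real T))" unfolding S_def by (rule S_lower[OF rpos rform T(3)])
    have "C' = (2 * C' * ln (real T)) / (2 * ln (real T))" using lnTpos by simp
    also have "\<dots> \<le> (sqrt \<epsilon> * sqrt (real T)) / (2 * ln (real T))" using key lnTpos by (intro divide_right_mono) auto
    also have "\<dots> = sqrt \<epsilon> * (sqrt (real T) / (2 * ln (real T)))" by simp
    also have "\<dots> \<le> sqrt \<epsilon> * S T" using SL e by (intro mult_left_mono) auto
    finally have "P \<epsilon> T" unfolding P_def using T by simp
    hence "N \<epsilon> \<le> T" unfolding N_def by (rule Least_le)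
    hence "real (N \<epsilon>) \<le> real T" by simp
    also have "\<dots> \<le> 2 * T1 \<epsilon>" by (rule T2)
    also have "2 * T1 \<epsilon> = 2 * A * norm ((1 / \<epsilon>) * (ln (1 / \<epsilon>))\<^sup>2)" unfolding T1_def using e A by simp
    finally show ?thesis .
  qed
  have "(\<lambda>\<epsilon>. real (N \<epsilon>)) \<in> O[at_right 0](\<lambda>\<epsilon>. (1 / \<epsilon>) * (ln (1 / \<epsilon>))\<^sup>2)"
  proof (rule bigoI[where c="2 * A"])
    show "eventually (\<lambda>\<epsilon>. norm (real (N \<epsilon>)) \<le> 2 * A * norm ((1 / \<epsilon>) * (ln (1 / \<epsilon>))\<^sup>2)) (at_right 0)"
      using ev by eventually_elim (use bnd in auto)
  qed
  thus ?thesis using good by blast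
qed


definition smooth :: "'a::real_normed_vector set \<Rightarrow> ('a \<Rightarrow> 'b::real_normed_vector) \<Rightarrow> bool" where
  "smooth S f \<longleftrightarrow> (\<exists>D. smooth_on S f D)"

lemma sm_const: "smooth S (\<lambda>x. c)"
  unfolding smooth_def using smooth_const by blast

lemma sm_linear: "bounded_linear f \<Longrightarrow> bounded S \<Longrightarrow> smooth S f"
  unfolding smooth_def using smooth_linear by blast

lemma sm_add: "smooth S f \<Longrightarrow> smooth S g \<Longrightarrow> smooth S (\<lambda>x. f x + g x)"
  unfolding smooth_def using smooth_add by blast

lemma sm_diff: "smooth S f \<Longrightarrow> smooth S g \<Longrightarrow> smooth S (\<lambda>x. f x - g x)"
  unfolding smooth_def using smooth_diff by blast

lemma sm_bilinear: "bounded_bilinear p \<Longrightarrow> smooth S f \<Longrightarrow> smooth S g \<Longrightarrow> smooth S (\<lambda>x. p (f x) (g x))"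
  unfolding smooth_def using smooth_bilinear by blast

lemma sm_mult: "smooth S f \<Longrightarrow> smooth S g \<Longrightarrow> smooth S (\<lambda>x. f x * g x)" for f g :: "_ \<Rightarrow> real"
  by (rule sm_bilinear[OF bounded_bilinear_mult])

lemma sm_sum:
  assumes "finite I" "\<And>i. i \<in> I \<Longrightarrow> smooth S (f i)"
  shows "smooth S (\<lambda>x. \<Sum>i\<in>I. f i x)"
  using assms
proof (induction I rule: finite_induct)
  case empty then show ?case using sm_const[of S 0] by simp
next
  case (insert a F)
  then show ?case using sm_add[of S "f a" "\<lambda>x. \<Sum>i\<in>F. f i x"] by simp
qed

lemma sm_cong: "(\<And>x. f x = g x) \<Longrightarrow> smooth S f \<Longrightarrow> smooth S g"
proof -
  assume "\<And>x. f x = g x"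
  hence "f = g" by (rule ext)
  thus "smooth S f \<Longrightarrow> smooth S g" by simp
qed

lemma sm_bound:
  assumes "smooth S f" obtains B where "\<And>x. x \<in> S \<Longrightarrow> norm (f x) \<le> B"
  using assms unfolding smooth_def by (meson smooth_onE)

lemma sm_comp:
  assumes "smooth_on U F DF" "smooth S f" "\<And>x. x \<in> S \<Longrightarrow> f x \<in> U"
  shows "smooth S (\<lambda>x. F (f x))"
  using assms unfolding smooth_def using smooth_compose by blast

lemma sm_lin_comp:
  assumes F: "bounded_linear F" and f: "smooth S f"
  shows "smooth S (\<lambda>x. F (f x))"
proof -
  obtain B where B: "\<And>x. x \<in> S \<Longrightarrow> norm (f x) \<le> B" using sm_bound[OF f] by blast
  have "bounded (f ` S)" unfolding bounded_iff using B by blast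
  hence "smooth_on (f ` S) F (\<lambda>x. F)" by (rule smooth_linear[OF F])
  thus ?thesis by (rule sm_comp[OF _ f]) auto
qed

lemma sm_real_fun:
  fixes \<phi> \<phi>' \<phi>'' :: "real \<Rightarrow> real" and f :: "'a::real_normed_vector \<Rightarrow> real"
  assumes f: "smooth S f"
    and d1: "\<And>t. t \<in> {a..b} \<Longrightarrow> (\<phi> has_real_derivative \<phi>' t) (at t)"
    and d2: "\<And>t. t \<in> {a..b} \<Longrightarrow> (\<phi>' has_real_derivative \<phi>'' t) (at t)"
    and c: "continuous_on {a..b} \<phi>''"
    and img: "\<And>x. x \<in> S \<Longrightarrow> f x \<in> {a..b}"
  shows "smooth S (\<lambda>x. \<phi> (f x))"
  by (rule sm_comp[OF smooth_real[OF d1 d2 c] f img])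


lemma bl_transpose: "bounded_linear (transpose :: real^'n^'m \<Rightarrow> real^'m^'n)"
proof -
  have "linear (transpose :: real^'n^'m \<Rightarrow> real^'m^'n)"
    by (rule linearI) (simp_all add: vec_eq_iff transpose_def)
  thus ?thesis by (simp add: linear_conv_bounded_linear)
qed

lemma bl_column: "bounded_linear (column i :: real^'n^'m \<Rightarrow> real^'m)"
proof -
  have "linear (column i :: real^'n^'m \<Rightarrow> real^'m)"
    by (rule linearI) (simp_all add: vec_eq_iff column_def)
  thus ?thesis by (simp add: linear_conv_bounded_linear)
qed

lemma bb_mv: "bounded_bilinear (\<lambda>(A::real^'n^'m) (x::real^'n). A *v x)"
proof -
  have "bilinear (\<lambda>(A::real^'n^'m) (x::real^'n). A *v x)"
    unfolding bilinear_def
  proof (intro conjI allI)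
    fix A :: "real^'n^'m" show "linear ((*v) A)" by (rule matrix_vector_mul_linear)
  next
    fix x :: "real^'n" show "linear (\<lambda>A::real^'n^'m. A *v x)"
      by (rule linearI) (simp_all add: vec_eq_iff matrix_vector_mult_def sum.distrib sum_distrib_left algebra_simps)
  qed
  thus ?thesis by (simp add: bilinear_conv_bounded_bilinear)
qed

lemma bb_mm: "bounded_bilinear (\<lambda>(A::real^'n^'m) (B::real^'k^'n). A ** B)"
proof -
  have "bilinear (\<lambda>(A::real^'n^'m) (B::real^'k^'n). A ** B)"
    unfolding bilinear_def
  proof (intro conjI allI)
    fix A :: "real^'n^'m" show "linear (\<lambda>B::real^'k^'n. A ** B)"
      by (rule linearI) (simp_all add: vec_eq_iff matrix_matrix_mult_def sum.distrib sum_distrib_left algebra_simps)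
  next
    fix B :: "real^'k^'n" show "linear (\<lambda>A::real^'n^'m. A ** B)"
      by (rule linearI) (simp_all add: vec_eq_iff matrix_matrix_mult_def sum.distrib sum_distrib_left algebra_simps)
  qed
  thus ?thesis by (simp add: bilinear_conv_bounded_bilinear)
qed

lemma sdl_ell_eq:
  assumes hpos: "\<forall>x. h x > 0"
  shows "sdl_ell h y a = ln (1 + (\<Sum>c\<in>UNIV. h (a $ c))) - (case y of None \<Rightarrow> 0 | Some j \<Rightarrow> ln (h (a $ j)))"
proof -
  have S: "1 + (\<Sum>c\<in>UNIV. h (a $ c)) > 0" using hpos by (simp add: add_pos_nonneg sum_nonneg less_imp_le)
  have "sdl_ell h y a = - ln (sdl_g h a y)"
  proof -
    have "(\<Sum>j\<in>UNIV. (if y = j then 1 else 0) * ln (sdl_g h a j)) = (\<Sum>j\<in>{y}. ln (sdl_g h a j))"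
      by (rule sum.mono_neutral_cong_right) auto
    thus ?thesis unfolding sdl_ell_def by simp
  qed
  also have "\<dots> = ln (1 + (\<Sum>c\<in>UNIV. h (a $ c))) - (case y of None \<Rightarrow> 0 | Some j \<Rightarrow> ln (h (a $ j)))"
  proof (cases y)
    case None then show ?thesis using S by (simp add: sdl_g_def ln_div)
  next
    case (Some j)
    have "h (a $ j) > 0" using hpos by simp
    then show ?thesis using S Some by (simp add: sdl_g_def ln_div)
  qed
  finally show ?thesis .
qed


lemma act_eq: "sdl_act kind Xd Xa Z i = (case kind of
      FilterBased \<Rightarrow> transpose (fst (snd (snd Z))) *v (transpose (fst Z) *v column i Xd)
    | FeatureBased \<Rightarrow> transpose (fst (snd (snd Z))) *v column i (fst (snd Z)))
    + transpose (snd (snd (snd Z))) *v column i Xa"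
  by (simp add: sdl_act_def prod.case_eq_if)

lemma sm_act:
  fixes S :: "('p::finite,'q::finite,'r::finite,'n::finite,'k::finite) sdl_param set"
  assumes S: "bounded S"
  shows "smooth S (\<lambda>Z. sdl_act kind Xd Xa Z i)"
proof -
  have Wb: "smooth S (\<lambda>Z::('p,'q,'r,'n,'k) sdl_param. transpose (fst (snd (snd Z))))"
    by (rule sm_lin_comp[OF bl_transpose sm_linear[OF _ S]])
       (intro bounded_linear_compose[OF bounded_linear_fst] bounded_linear_compose[OF bounded_linear_snd] bounded_linear_snd)
  have Gb: "smooth S (\<lambda>Z::('p,'q,'r,'n,'k) sdl_param. transpose (snd (snd (snd Z))) *v column i Xa)"
    by (rule sm_lin_comp[OF bounded_bilinear.bounded_linear_left[OF bb_mv] sm_lin_comp[OF bl_transpose sm_linear[OF _ S]]])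
       (intro bounded_linear_compose[OF bounded_linear_snd] bounded_linear_snd)
  have Ab: "smooth S (\<lambda>Z::('p,'q,'r,'n,'k) sdl_param. (case kind of
      FilterBased \<Rightarrow> transpose (fst (snd (snd Z))) *v (transpose (fst Z) *v column i Xd)
    | FeatureBased \<Rightarrow> transpose (fst (snd (snd Z))) *v column i (fst (snd Z))))"
  proof (cases kind)
    case FilterBased
    have "smooth S (\<lambda>Z::('p,'q,'r,'n,'k) sdl_param. transpose (fst Z) *v column i Xd)"
      by (rule sm_lin_comp[OF bounded_bilinear.bounded_linear_left[OF bb_mv] sm_lin_comp[OF bl_transpose sm_linear[OF bounded_linear_fst S]]])
    then show ?thesis using sm_bilinear[OF bb_mv Wb] FilterBased by simp
  next
    case FeatureBased
    have "smooth S (\<lambda>Z::('p,'q,'r,'n,'k) sdl_param. column i (fst (snd Z)))"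
      by (rule sm_lin_comp[OF bl_column sm_linear[OF _ S]])
         (intro bounded_linear_compose[OF bounded_linear_fst] bounded_linear_snd)
    then show ?thesis using sm_bilinear[OF bb_mv Wb] FeatureBased by simp
  qed
  show ?thesis by (rule sm_cong[OF _ sm_add[OF Ab Gb]]) (simp add: act_eq)
qed


lemma sm_loss:
  fixes S :: "('p::finite,'q::finite,'r::finite,'n::finite,'k::finite) sdl_param set"
    and h h' h'' :: "real \<Rightarrow> real" and y :: "'n \<Rightarrow> 'k option"
  assumes hpos: "\<forall>x. h x > 0"
    and d1: "\<forall>x. (h has_real_derivative h' x) (at x)"
    and d2: "\<forall>x. (h' has_real_derivative h'' x) (at x)"
    and c2: "continuous_on UNIV h''"
    and S: "bounded S"
  shows "smooth S (sdl_loss h kind Xd Xa y \<xi>)"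
proof -
  have ch: "continuous_on A h" for A using d1 by (meson DERIV_isCont continuous_at_imp_continuous_on)
  have ch': "continuous_on A h'" for A using d2 by (meson DERIV_isCont continuous_at_imp_continuous_on)
  have ch'': "continuous_on A h''" for A using c2 continuous_on_subset by blast
  have hne: "h t \<noteq> 0" for t using hpos by (metis less_irrefl)
  have lnh_d1: "((\<lambda>t. ln (h t)) has_real_derivative h' t / h t) (at t)" for t
  proof -
    have "((\<lambda>t. ln (h t)) has_real_derivative inverse (h t) * h' t) (at t)"
      by (rule DERIV_chain2[OF DERIV_ln]) (use hpos d1 in auto)
    thus ?thesis by (simp add: divide_inverse mult.commute)
  qed
  have lnh_d2: "((\<lambda>t. h' t / h t) has_real_derivative (h'' t * h t - h' t * h' t) / (h t)\<^sup>2) (at t)" for t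
    using DERIV_divide[OF d2[rule_format] d1[rule_format] hne] by (simp add: power2_eq_square)
  have lnh_c: "continuous_on A (\<lambda>t. (h'' t * h t - h' t * h' t) / (h t)\<^sup>2)" for A
    using ch ch' ch'' hne by (intro continuous_intros) auto
  have each: "smooth S (\<lambda>Z. sdl_ell h (y i) (sdl_act kind Xd Xa Z i))" for i
  proof -
    let ?A = "\<lambda>Z. sdl_act kind Xd Xa Z i"
    have A: "smooth S ?A" by (rule sm_act[OF S])
    obtain B where B: "\<And>Z. Z \<in> S \<Longrightarrow> norm (?A Z) \<le> B" using sm_bound[OF A] by blast
    have comp: "smooth S (\<lambda>Z. ?A Z $ c)" for c by (rule sm_lin_comp[OF bounded_linear_vec_nth A])
    have compB: "?A Z $ c \<in> {-B..B}" if "Z \<in> S" for Z c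
      using component_le_norm_cart[of "?A Z" c] B[OF that] by (auto simp: abs_le_iff)
    have hc: "smooth S (\<lambda>Z. h (?A Z $ c))" for c
      by (rule sm_real_fun[OF comp, of "-B" B h h' h'']) (use d1 d2 ch'' compB in auto)
    let ?S = "\<lambda>Z. 1 + (\<Sum>c\<in>UNIV. h (?A Z $ c))"
    have Ss: "smooth S ?S" by (rule sm_add[OF sm_const sm_sum]) (use hc in auto)
    obtain B2 where B2: "\<And>Z. Z \<in> S \<Longrightarrow> norm (?S Z) \<le> B2" using sm_bound[OF Ss] by blast
    have S1: "?S Z \<ge> 1" for Z using hpos by (simp add: sum_nonneg less_imp_le)
    have lnS: "smooth S (\<lambda>Z. ln (?S Z))"
    proof (rule sm_real_fun[OF Ss, of 1 B2 ln inverse "\<lambda>t. - (inverse t ^ Suc (Suc 0))"])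
      show "(ln has_real_derivative inverse t) (at t)" if "t \<in> {1..B2}" for t using that by (auto intro!: DERIV_ln)
      show "(inverse has_real_derivative - (inverse t ^ Suc (Suc 0))) (at t)" if "t \<in> {1..B2}" for t
        using DERIV_inverse[of t] that by simp
      show "continuous_on {1..B2} (\<lambda>t. - (inverse t ^ Suc (Suc 0)))" by (intro continuous_intros) auto
      show "?S Z \<in> {1..B2}" if "Z \<in> S" for Z using S1[of Z] B2[OF that] by auto
    qed
    have lnhc: "smooth S (\<lambda>Z. (case y i of None \<Rightarrow> 0 | Some j \<Rightarrow> ln (h (?A Z $ j))))"
    proof (cases "y i")
      case None then show ?thesis using sm_const by simp
    next
      case (Some j)
      have "smooth S (\<lambda>Z. ln (h (?A Z $ j)))"
        by (rule sm_real_fun[OF comp, of "-B" B "\<lambda>t. ln (h t)" "\<lambda>t. h' t / h t" "\<lambda>t. (h'' t * h t - h' t * h' t) / (h t)\<^sup>2"])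
           (use lnh_d1 lnh_d2 lnh_c compB in auto)
      then show ?thesis using Some by simp
    qed
    show ?thesis by (rule sm_cong[OF _ sm_diff[OF lnS lnhc]]) (simp add: sdl_ell_eq[OF hpos])
  qed
  have R: "smooth S (\<lambda>Z::('p,'q,'r,'n,'k) sdl_param. Xd - fst Z ** fst (snd Z))"
  proof -
    have "smooth S (\<lambda>Z::('p,'q,'r,'n,'k) sdl_param. fst Z ** fst (snd Z))"
      by (rule sm_bilinear[OF bb_mm sm_linear[OF bounded_linear_fst S] sm_linear[OF _ S]])
         (intro bounded_linear_compose[OF bounded_linear_fst] bounded_linear_snd)
    thus ?thesis by (rule sm_diff[OF sm_const])
  qed
  have R2: "smooth S (\<lambda>Z::('p,'q,'r,'n,'k) sdl_param. \<xi> * inner (Xd - fst Z ** fst (snd Z)) (Xd - fst Z ** fst (snd Z)))"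
    by (rule sm_mult[OF sm_const sm_bilinear[OF bounded_bilinear_inner R R]])
  show ?thesis
    by (rule sm_cong[OF _ sm_add[OF sm_sum[OF _ each] R2]]) (auto simp: sdl_loss_def power2_norm_eq_inner)
qed


lemma abstract_main:
  fixes L :: "('a::euclidean_space \<times> 'b::euclidean_space \<times> 'c::euclidean_space \<times> 'd::euclidean_space) \<Rightarrow> real"
    and r :: "nat \<Rightarrow> real"
  assumes sm: "smooth_on (CW \<times> CH \<times> Cb \<times> CG) L D"
    and conv: "convex CW" "convex CH" "convex Cb" "convex CG"
    and comp: "compact CW" "compact CH" "compact Cb" "compact CG"
    and r_pos: "\<forall>t\<ge>1. r t > 0"
    and r_div: "filterlim (\<lambda>T. \<Sum>t=1..T. r t) at_top sequentially"
    and r_sq: "summable (\<lambda>t. (r t)\<^sup>2)"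
    and iter: "bcd_dr L CW CH Cb CG r Z"
  shows
    "(\<lambda>t. infdist (Z t) {Z'. stationary_on L (CW \<times> CH \<times> Cb \<times> CG) Z'})
        \<longlonglongrightarrow> 0
     \<and> (\<lambda>T. Min ((\<lambda>k. stat_measure L (CW \<times> CH \<times> Cb \<times> CG) (Z k)) ` {1..T}))
        \<in> O(\<lambda>T. 1 / (\<Sum>k=1..T. r k))
     \<and> ((\<forall>k\<ge>2. r k = 1 / (sqrt (real k) * ln (real k))) \<longrightarrow>
        (\<exists>N :: real \<Rightarrow> nat.
           (\<lambda>\<epsilon>. real (N \<epsilon>)) \<in> O[at_right 0](\<lambda>\<epsilon>. (1 / \<epsilon>) * (ln (1 / \<epsilon>))\<^sup>2) \<and>
           (\<forall>\<epsilon>>0. \<exists>k\<in>{1..N \<epsilon>}.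
              eps_stationary L (CW \<times> CH \<times> Cb \<times> CG) \<epsilon> (Z k))))"
proof -
  let ?T = "CW \<times> CH \<times> Cb \<times> CG"
  obtain K where K: "K > 0"
    "\<And>k. Z k \<in> ?T"
    "\<And>k. k \<ge> 1 \<Longrightarrow> L (Z k) \<le> L (Z (k - 1))"
    "\<And>k. k \<ge> 1 \<Longrightarrow> norm (Z k - Z (k - 1)) \<le> 4 * r k"
    "\<And>k. k \<ge> 1 \<Longrightarrow> r k * stat_measure L ?T (Z k) \<le> L (Z (k - 1)) - L (Z k) + 16 * K * (r k)\<^sup>2"
    "\<And>x. x \<in> ?T \<Longrightarrow> \<bar>L x\<bar> \<le> K"
    "\<And>x y. x \<in> ?T \<Longrightarrow> y \<in> ?T \<Longrightarrow> norm (grad L x - grad L y) \<le> K * norm (x - y)"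
    by (rule bcd_facts[OF sm conv r_pos iter]) blast
  define m where "m k = stat_measure L ?T (Z k)" for k
  have mnn: "0 \<le> m k" for k unfolding m_def by (rule stat_measure_nonneg[OF K(2)])
  define C where "C = 2 * K + 16 * K * suminf (\<lambda>t. (r t)\<^sup>2)"
  have pb: "\<And>n. (\<Sum>k<n. (\<lambda>k. if k = 0 then 0 else r k * m k) k) \<le> C"
    "summable (\<lambda>k. if k = 0 then 0 else r k * m k)"
    using partial_bound[of r m "\<lambda>k. L (Z k)" K, OF K(5)[unfolded m_def[symmetric]] K(6)[OF K(2)] K(1) mnn r_pos r_sq]
    unfolding C_def by auto
  have r0: "r \<longlonglongrightarrow> 0"
  proof -
    have "(\<lambda>t. (r t)\<^sup>2) \<longlonglongrightarrow> 0" by (rule summable_LIMSEQ_zero[OF r_sq])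
    hence "(\<lambda>t. sqrt ((r t)\<^sup>2)) \<longlonglongrightarrow> sqrt 0" by (rule tendsto_real_sqrt)
    hence "(\<lambda>t. \<bar>r t\<bar>) \<longlonglongrightarrow> 0" by simp
    thus ?thesis by (simp add: tendsto_rabs_zero_iff)
  qed
  have Tc: "compact ?T" using comp by (intro compact_Times) auto
  have P1: "(\<lambda>t. infdist (Z t) {Z'. stationary_on L ?T Z'}) \<longlonglongrightarrow> 0"
  proof -
    have summ: "summable (\<lambda>k. if k = 0 then 0 else r k * stat_measure L ?T (Z k))"
      using pb(2) unfolding m_def .
    show ?thesis by (rule part_i[OF Tc K(2) K(4) K(7) K(1) summ r_pos r0 r_div])
  qed
  have mb: "Min (m ` {1..T}) * (\<Sum>k=1..T. r k) \<le> C" "(\<Sum>k=1..T. r k) > 0"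
      "\<exists>k\<in>{1..T}. m k * (\<Sum>k=1..T. r k) \<le> C" if "T \<ge> 1" for T
    using min_bound[of r m C, OF pb(1) mnn r_pos that] by auto
  have P2: "(\<lambda>T. Min (m ` {1..T})) \<in> O(\<lambda>T. 1 / (\<Sum>k=1..T. r k))"
  proof (rule bigoI[where c=C])
    show "eventually (\<lambda>T. norm (Min (m ` {1..T})) \<le> C * norm (1 / (\<Sum>k=1..T. r k))) at_top"
      unfolding eventually_at_top_linorder
    proof (intro exI allI impI)
      fix T :: nat assume T: "T \<ge> 1"
      have "Min (m ` {1..T}) \<in> m ` {1..T}" using T by (intro Min_in) auto
      hence Mnn: "Min (m ` {1..T}) \<ge> 0" using mnn by auto
      have "Min (m ` {1..T}) \<le> C / (\<Sum>k=1..T. r k)" using mb[OF T] by (simp add: pos_le_divide_eq)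
      thus "norm (Min (m ` {1..T})) \<le> C * norm (1 / (\<Sum>k=1..T. r k))" using Mnn mb(2)[OF T] by simp
    qed
  qed
  have P3: "(\<forall>k\<ge>2. r k = 1 / (sqrt (real k) * ln (real k))) \<longrightarrow>
        (\<exists>N :: real \<Rightarrow> nat.
           (\<lambda>\<epsilon>. real (N \<epsilon>)) \<in> O[at_right 0](\<lambda>\<epsilon>. (1 / \<epsilon>) * (ln (1 / \<epsilon>))\<^sup>2) \<and>
           (\<forall>\<epsilon>>0. \<exists>k\<in>{1..N \<epsilon>}. eps_stationary L ?T \<epsilon> (Z k)))"
  proof
    assume rf: "\<forall>k\<ge>2. r k = 1 / (sqrt (real k) * ln (real k))"
    obtain N where N: "(\<lambda>\<epsilon>. real (N \<epsilon>)) \<in> O[at_right 0](\<lambda>\<epsilon>. (1 / \<epsilon>) * (ln (1 / \<epsilon>))\<^sup>2)"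
      "\<forall>\<epsilon>>0. \<exists>k\<in>{1..N \<epsilon>}. m k \<le> sqrt \<epsilon>"
      using part_iii[of r m C, OF r_pos mb(3) r_div rf] by blast
    show "\<exists>N :: real \<Rightarrow> nat.
           (\<lambda>\<epsilon>. real (N \<epsilon>)) \<in> O[at_right 0](\<lambda>\<epsilon>. (1 / \<epsilon>) * (ln (1 / \<epsilon>))\<^sup>2) \<and>
           (\<forall>\<epsilon>>0. \<exists>k\<in>{1..N \<epsilon>}. eps_stationary L ?T \<epsilon> (Z k))"
      using N K(2) unfolding eps_stationary_def m_def by blast
  qed
  show ?thesis using P1 P2 P3 unfolding m_def by blast
qed


theorem mainTheorem4:
  fixes h h' h'' :: "real \<Rightarrow> real"
    and kind :: sdl_kind
    and Xd :: "real^'n::finite^'p::finite" and Xa :: "real^'n^'q::finite"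
    and y :: "'n \<Rightarrow> 'k::finite option"
    and CW :: "(real^'r::finite^'p) set" and CH :: "(real^'n^'r) set"
    and Cb :: "(real^'k^'r) set" and CG :: "(real^'k^'q) set"
    and r :: "nat \<Rightarrow> real" and \<xi> :: real
    and Z :: "nat \<Rightarrow> ('p,'q,'r,'n,'k) sdl_param"
  assumes h_pos: "\<forall>x. h x > 0"
    and A4: "assm_A4 h h' h'' y"
    and conv: "convex CW" "convex CH" "convex Cb" "convex CG"
    and comp: "compact CW" "compact CH" "compact Cb" "compact CG"
    and r_pos: "\<forall>t\<ge>1. r t > 0"
    and r_div: "filterlim (\<lambda>T. \<Sum>t=1..T. r t) at_top sequentially"
    and r_sq: "summable (\<lambda>t. (r t)\<^sup>2)"
    and xi: "\<xi> \<ge> 0"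
    and iter: "bcd_dr (sdl_loss h kind Xd Xa y \<xi>) CW CH Cb CG r Z"
  shows
    "(\<lambda>t. infdist (Z t) {Z'. stationary_on (sdl_loss h kind Xd Xa y \<xi>) (CW \<times> CH \<times> Cb \<times> CG) Z'})
        \<longlonglongrightarrow> 0
     \<and> (\<lambda>T. Min ((\<lambda>k. stat_measure (sdl_loss h kind Xd Xa y \<xi>) (CW \<times> CH \<times> Cb \<times> CG) (Z k)) ` {1..T}))
        \<in> O(\<lambda>T. 1 / (\<Sum>k=1..T. r k))
     \<and> ((\<forall>k\<ge>2. r k = 1 / (sqrt (real k) * ln (real k))) \<longrightarrow>
        (\<exists>N :: real \<Rightarrow> nat.
           (\<lambda>\<epsilon>. real (N \<epsilon>)) \<in> O[at_right 0](\<lambda>\<epsilon>. (1 / \<epsilon>) * (ln (1 / \<epsilon>))\<^sup>2) \<and>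
           (\<forall>\<epsilon>>0. \<exists>k\<in>{1..N \<epsilon>}.
              eps_stationary (sdl_loss h kind Xd Xa y \<xi>) (CW \<times> CH \<times> Cb \<times> CG) \<epsilon> (Z k))))"
  proof -
  have A4': "\<forall>x. (h has_real_derivative h' x) (at x)" "\<forall>x. (h' has_real_derivative h'' x) (at x)"
    "continuous_on UNIV h''" using A4 unfolding assm_A4_def by blast+
  have Tc: "compact (CW \<times> CH \<times> Cb \<times> CG)" using comp by (intro compact_Times) auto
  have Tb: "bounded (CW \<times> CH \<times> Cb \<times> CG)" by (rule compact_imp_bounded[OF Tc])
  have "smooth (CW \<times> CH \<times> Cb \<times> CG) (sdl_loss h kind Xd Xa y \<xi>)"
    by (rule sm_loss[OF h_pos A4'(1) A4'(2) A4'(3) Tb])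
  then obtain D where sm: "smooth_on (CW \<times> CH \<times> Cb \<times> CG) (sdl_loss h kind Xd Xa y \<xi>) D"
    unfolding smooth_def by blast
  show ?thesis by (rule abstract_main[OF sm conv comp r_pos r_div r_sq iter])
qed

end
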